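(* The functor $T\colon\mathsf{WHB}\to\mathsf{TBA}$ is left adjoint to the functor $M\colon\mathsf{TBA}\to\mathsf{WHB}$. Moreover, $T$ preserves monomorphisms and is faithful, and $M$ is full and faithful.
   Context: A WHB-algebra is an algebra $(A,\wedge,\vee,\to,\leftarrow,0,1)$ such that $(A,\wedge,\vee,0,1)$ is a bounded distributive lattice and for all $a,b,c\in A$: $a\to a=1$; $a\to(b\wedge c)=(a\to b)\wedge(a\to c)$; $(a\vee b)\to c=(a\to c)\wedge(b\to c)$; $(a\to b)\wedge(b\to c)\le a\to c$; $a\leftarrow a=0$; $(a\vee b)\leftarrow c=(a\leftarrow c)\vee(b\leftarrow c)$; $a\leftarrow(b\wedge c)=(a\leftarrow b)\vee(a\leftarrow c)$; $a\leftarrow c\le(a\leftarrow b)\vee(b\leftarrow c)$; $a\wedge((a\to b)\leftarrow 0)\le b$; $a\le b\vee(1\to(a\leftarrow b))$. $\mathsf{WHB}$ is the category of WHB-algebras and homomorphisms. A tense algebra is $(\mathbf B,G,H)$ with $\mathbf B$ a Boolean algebra and $G,H$ unary operations such that, with $P(x)=\neg H(\neg x)$ and $F(x)=\neg G(\neg x)$, $P$ is left adjoint to $G$ and $F$ is left adjoint to $H$ (i.e. $P(x)\le y\iff x\le G(y)$ and $F(x)\le y\iff x\le H(y)$); $\mathsf{TBA}$ is the category of tense algebras and homomorphisms. $M(\mathbf B,G,H)$ is the WHB-algebra $(B,\wedge,\vee,\to,\leftarrow,0,1)$ with $x\to y=G(\neg x\vee y)$ and $x\leftarrow y=P(x\wedge\neg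 y)$, and $M$ is the identity on morphisms. For a WHB-algebra $\mathbf A$: $X(\mathbf A)$ is its set of prime filters, $\sigma_{\mathbf A}(a)=\{P\in X(\mathbf A)\colon a\in P\}$, $\tau_{\mathbf A}$ the topology with subbase $\{\sigma_{\mathbf A}(a)\}\cup\{X(\mathbf A)\setminus\sigma_{\mathbf A}(a)\}$; $(P,Q)\in R_{\mathbf A}$ iff for all $a,b$ ($a\to b\in P$, $a\in Q$ imply $b\in Q$); $(P,Q)\in S_{\mathbf A}$ iff for all $a,b$ ($a\in Q$, $b\notin Q$ imply $a\leftarrow b\in P$). $\mathcal B(\mathbf A)$ is the set of clopen subsets of $(X(\mathbf A),\tau_{\mathbf A})$ (equivalently finite unions of sets $\sigma_{\mathbf A}(a)\setminus\sigma_{\mathbf A}(b)$). $T(\mathbf A)=(\mathcal B(\mathbf A),\cup,\cap,{}^c,G_{\mathbf A},H_{\mathbf A},\emptyset,X(\mathbf A))$ with $G_{\mathbf A}(U)=\{P\colon R_{\mathbf A}(P)\subseteq U\}$ and $H_{\mathbf A}(U)=\{P\colon S_{\mathbf A}(P)\subseteq U\}$, where $\mathcal R(P)=\{Q\colon (P,Q)\in\mathcal R\}$. For a homomorphism $h\colon\mathbf A\to\mathbf B$, $T(h)(U)=\{Q\in X(\mathbf B)\colon h^{-1}(Q)\in U\}$, so that $T(h)(\sigma_{\mathbf A}(a)\setminus\sigma_{\mathbf A}(b))=\sigma_{\mathbf B}(h(a))\setminus\sigma_{\mathbf B}(h(b))$. *)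

theory Defs
  imports "HOL-Analysis.Analysis"
begin

record 'a whb =
  wcar :: "'a set"
  wmeet :: "'a \<Rightarrow> 'a \<Rightarrow> 'a"
  wjoin :: "'a \<Rightarrow> 'a \<Rightarrow> 'a"
  wimp :: "'a \<Rightarrow> 'a \<Rightarrow> 'a"
  wcoimp :: "'a \<Rightarrow> 'a \<Rightarrow> 'a"
  wbot :: 'a
  wtop :: 'a

record 'b tba =
  tcar :: "'b set"
  tmeet :: "'b \<Rightarrow> 'b \<Rightarrow> 'b"
  tjoin :: "'b \<Rightarrow> 'b \<Rightarrow> 'b"
  tneg :: "'b \<Rightarrow> 'b"
  tG :: "'b \<Rightarrow> 'b"
  tH :: "'b \<Rightarrow> 'b"
  tbot :: 'b
  ttop :: 'b

definition bdl :: "'a set \<Rightarrow> ('a \<Rightarrow> 'a \<Rightarrow> 'a) \<Rightarrow> ('a \<Rightarrow> 'a \<Rightarrow> 'a) \<Rightarrow> 'a \<Rightarrow> 'a \<Rightarrow> bool" where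
  "bdl C m j b t \<longleftrightarrow> b \<in> C \<and> t \<in> C \<and>
    (\<forall>x\<in>C. \<forall>y\<in>C. m x y \<in> C \<and> j x y \<in> C \<and> m x y = m y x \<and> j x y = j y x
       \<and> m x (j x y) = x \<and> j x (m x y) = x) \<and>
    (\<forall>x\<in>C. \<forall>y\<in>C. \<forall>z\<in>C. m x (m y z) = m (m x y) z \<and> j x (j y z) = j (j x y) z
       \<and> m x (j y z) = j (m x y) (m x z)) \<and>
    (\<forall>x\<in>C. j b x = x \<and> m t x = x)"

definition wle :: "('a, 'm) whb_scheme \<Rightarrow> 'a \<Rightarrow> 'a \<Rightarrow> bool" where
  "wle A x y \<longleftrightarrow> wmeet A x y = x"

definition whb_algebra :: "('a, 'm) whb_scheme \<Rightarrow> bool" where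
  "whb_algebra A \<longleftrightarrow> bdl (wcar A) (wmeet A) (wjoin A) (wbot A) (wtop A) \<and>
   (\<forall>a\<in>wcar A. \<forall>b\<in>wcar A. wimp A a b \<in> wcar A \<and> wcoimp A a b \<in> wcar A) \<and>
   (\<forall>a\<in>wcar A. \<forall>b\<in>wcar A. \<forall>c\<in>wcar A.
      wimp A a a = wtop A \<and>
      wimp A a (wmeet A b c) = wmeet A (wimp A a b) (wimp A a c) \<and>
      wimp A (wjoin A a b) c = wmeet A (wimp A a c) (wimp A b c) \<and>
      wle A (wmeet A (wimp A a b) (wimp A b c)) (wimp A a c) \<and>
      wcoimp A a a = wbot A \<and>
      wcoimp A (wjoin A a b) c = wjoin A (wcoimp A a c) (wcoimp A b c) \<and>
      wcoimp A a (wmeet A b c) = wjoin A (wcoimp A a b) (wcoimp A a c) \<and>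
      wle A (wcoimp A a c) (wjoin A (wcoimp A a b) (wcoimp A b c)) \<and>
      wle A (wmeet A a (wcoimp A (wimp A a b) (wbot A))) b \<and>
      wle A a (wjoin A b (wimp A (wtop A) (wcoimp A a b))))"

definition tle :: "('b, 'm) tba_scheme \<Rightarrow> 'b \<Rightarrow> 'b \<Rightarrow> bool" where
  "tle B x y \<longleftrightarrow> tmeet B x y = x"

definition tP :: "('b, 'm) tba_scheme \<Rightarrow> 'b \<Rightarrow> 'b" where
  "tP B x = tneg B (tH B (tneg B x))"

definition tF :: "('b, 'm) tba_scheme \<Rightarrow> 'b \<Rightarrow> 'b" where
  "tF B x = tneg B (tG B (tneg B x))"

definition boolean_algebra_on :: "('b, 'm) tba_scheme \<Rightarrow> bool" where
  "boolean_algebra_on B \<longleftrightarrow> bdl (tcar B) (tmeet B) (tjoin B) (tbot B) (ttop B) \<and>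
   (\<forall>x\<in>tcar B. tneg B x \<in> tcar B \<and> tmeet B x (tneg B x) = tbot B \<and> tjoin B x (tneg B x) = ttop B)"

definition tense_algebra :: "('b, 'm) tba_scheme \<Rightarrow> bool" where
  "tense_algebra B \<longleftrightarrow> boolean_algebra_on B \<and>
   (\<forall>x\<in>tcar B. tG B x \<in> tcar B \<and> tH B x \<in> tcar B) \<and>
   (\<forall>x\<in>tcar B. \<forall>y\<in>tcar B. (tle B (tP B x) y \<longleftrightarrow> tle B x (tG B y)) \<and>
                               (tle B (tF B x) y \<longleftrightarrow> tle B x (tH B y)))"

text \<open>Homomorphisms (only their values on the carrier matter).\<close>
definition whb_hom :: "('a, 'm) whb_scheme \<Rightarrow> ('c, 'n) whb_scheme \<Rightarrow> ('a \<Rightarrow> 'c) \<Rightarrow> bool" where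
  "whb_hom A A' h \<longleftrightarrow> (\<forall>a\<in>wcar A. h a \<in> wcar A') \<and>
   (\<forall>a\<in>wcar A. \<forall>b\<in>wcar A.
      h (wmeet A a b) = wmeet A' (h a) (h b) \<and> h (wjoin A a b) = wjoin A' (h a) (h b) \<and>
      h (wimp A a b) = wimp A' (h a) (h b) \<and> h (wcoimp A a b) = wcoimp A' (h a) (h b)) \<and>
   h (wbot A) = wbot A' \<and> h (wtop A) = wtop A'"

definition tba_hom :: "('b, 'm) tba_scheme \<Rightarrow> ('d, 'n) tba_scheme \<Rightarrow> ('b \<Rightarrow> 'd) \<Rightarrow> bool" where
  "tba_hom B B' g \<longleftrightarrow> (\<forall>x\<in>tcar B. g x \<in> tcar B') \<and>
   (\<forall>x\<in>tcar B. \<forall>y\<in>tcar B.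
      g (tmeet B x y) = tmeet B' (g x) (g y) \<and> g (tjoin B x y) = tjoin B' (g x) (g y)) \<and>
   (\<forall>x\<in>tcar B. g (tneg B x) = tneg B' (g x) \<and> g (tG B x) = tG B' (g x) \<and> g (tH B x) = tH B' (g x)) \<and>
   g (tbot B) = tbot B' \<and> g (ttop B) = ttop B'"

definition Mfun :: "('b, 'm) tba_scheme \<Rightarrow> 'b whb" where
  "Mfun B = \<lparr> wcar = tcar B, wmeet = tmeet B, wjoin = tjoin B,
     wimp = (\<lambda>x y. tG B (tjoin B (tneg B x) y)),
     wcoimp = (\<lambda>x y. tP B (tmeet B x (tneg B y))),
     wbot = tbot B, wtop = ttop B \<rparr>"

text \<open>On morphisms M is the identity.\<close>

definition prime_filter :: "('a, 'm) whb_scheme \<Rightarrow> 'a set \<Rightarrow> bool" where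
  "prime_filter A P \<longleftrightarrow> P \<subseteq> wcar A \<and> wtop A \<in> P \<and> wbot A \<notin> P \<and>
    (\<forall>a\<in>P. \<forall>b\<in>P. wmeet A a b \<in> P) \<and>
    (\<forall>a\<in>P. \<forall>b\<in>wcar A. wle A a b \<longrightarrow> b \<in> P) \<and>
    (\<forall>a\<in>wcar A. \<forall>b\<in>wcar A. wjoin A a b \<in> P \<longrightarrow> a \<in> P \<or> b \<in> P)"

definition Xsp :: "('a, 'm) whb_scheme \<Rightarrow> 'a set set" where
  "Xsp A = {P. prime_filter A P}"

definition sigma :: "('a, 'm) whb_scheme \<Rightarrow> 'a \<Rightarrow> 'a set set" where
  "sigma A a = {P \<in> Xsp A. a \<in> P}"

definition tau :: "('a, 'm) whb_scheme \<Rightarrow> 'a set topology" where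
  "tau A = topology_generated_by
     ((sigma A ` wcar A) \<union> ((\<lambda>a. Xsp A - sigma A a) ` wcar A))"

definition clopens :: "('a, 'm) whb_scheme \<Rightarrow> 'a set set set" where
  "clopens A = {U. openin (tau A) U \<and> closedin (tau A) U}"

definition Rrel :: "('a, 'm) whb_scheme \<Rightarrow> ('a set \<times> 'a set) set" where
  "Rrel A = {(P, Q). P \<in> Xsp A \<and> Q \<in> Xsp A \<and>
     (\<forall>a\<in>wcar A. \<forall>b\<in>wcar A. wimp A a b \<in> P \<longrightarrow> a \<in> Q \<longrightarrow> b \<in> Q)}"

definition Srel :: "('a, 'm) whb_scheme \<Rightarrow> ('a set \<times> 'a set) set" where
  "Srel A = {(P, Q). P \<in> Xsp A \<and> Q \<in> Xsp A \<and>
     (\<forall>a\<in>wcar A. \<forall>b\<in>wcar A. a \<in> Q \<longrightarrow> b \<notin> Q \<longrightarrow> wcoimp A a b \<in> P)}"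

definition GA :: "('a, 'm) whb_scheme \<Rightarrow> 'a set set \<Rightarrow> 'a set set" where
  "GA A U = {P \<in> Xsp A. Rrel A `` {P} \<subseteq> U}"

definition HA :: "('a, 'm) whb_scheme \<Rightarrow> 'a set set \<Rightarrow> 'a set set" where
  "HA A U = {P \<in> Xsp A. Srel A `` {P} \<subseteq> U}"

definition Tfun :: "('a, 'm) whb_scheme \<Rightarrow> 'a set set tba" where
  "Tfun A = \<lparr> tcar = clopens A, tmeet = (\<inter>), tjoin = (\<union>),
     tneg = (\<lambda>U. Xsp A - U), tG = GA A, tH = HA A,
     tbot = {}, ttop = Xsp A \<rparr>"

definition Tmor :: "('a, 'm) whb_scheme \<Rightarrow> ('c, 'n) whb_scheme \<Rightarrow> ('a \<Rightarrow> 'c)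
                     \<Rightarrow> 'a set set \<Rightarrow> 'c set set" where
  "Tmor A A' h U = {Q \<in> Xsp A'. {a \<in> wcar A. h a \<in> Q} \<in> U}"

end

theory Submission
  imports Defs
begin


locale DLat =
  fixes C :: "'a set" and m j :: "'a \<Rightarrow> 'a \<Rightarrow> 'a" and b t :: 'a
  assumes bdl: "bdl C m j b t"
begin

lemma bC[simp]: "b \<in> C" and tC[simp]: "t \<in> C"
  using bdl unfolding bdl_def by blast+

lemma mC[simp]: "x \<in> C \<Longrightarrow> y \<in> C \<Longrightarrow> m x y \<in> C"
  and jC[simp]: "x \<in> C \<Longrightarrow> y \<in> C \<Longrightarrow> j x y \<in> C"
  and mcomm: "x \<in> C \<Longrightarrow> y \<in> C \<Longrightarrow> m x y = m y x"
  and jcomm: "x \<in> C \<Longrightarrow> y \<in> C \<Longrightarrow> j x y = j y x"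
  and absm: "x \<in> C \<Longrightarrow> y \<in> C \<Longrightarrow> m x (j x y) = x"
  and absj: "x \<in> C \<Longrightarrow> y \<in> C \<Longrightarrow> j x (m x y) = x"
  using bdl unfolding bdl_def by blast+

lemma massoc0: "x \<in> C \<Longrightarrow> y \<in> C \<Longrightarrow> z \<in> C \<Longrightarrow> m x (m y z) = m (m x y) z"
  and jassoc0: "x \<in> C \<Longrightarrow> y \<in> C \<Longrightarrow> z \<in> C \<Longrightarrow> j x (j y z) = j (j x y) z"
  and mdist: "x \<in> C \<Longrightarrow> y \<in> C \<Longrightarrow> z \<in> C \<Longrightarrow> m x (j y z) = j (m x y) (m x z)"
  using bdl unfolding bdl_def by blast+

lemma massoc: "x \<in> C \<Longrightarrow> y \<in> C \<Longrightarrow> z \<in> C \<Longrightarrow> m (m x y) z = m x (m y z)"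
  by (simp add: massoc0)
lemma jassoc: "x \<in> C \<Longrightarrow> y \<in> C \<Longrightarrow> z \<in> C \<Longrightarrow> j (j x y) z = j x (j y z)"
  by (simp add: jassoc0)

lemma jb[simp]: "x \<in> C \<Longrightarrow> j b x = x" and mt[simp]: "x \<in> C \<Longrightarrow> m t x = x"
  using bdl unfolding bdl_def by blast+

lemma jb2[simp]: "x \<in> C \<Longrightarrow> j x b = x" and mt2[simp]: "x \<in> C \<Longrightarrow> m x t = x"
  using jcomm[of x b] mcomm[of x t] by auto

lemma mid[simp]: "x \<in> C \<Longrightarrow> m x x = x"
  by (metis absj absm mC)
lemma jid[simp]: "x \<in> C \<Longrightarrow> j x x = x"
  by (metis absj absm jC)

lemma mb[simp]: "x \<in> C \<Longrightarrow> m b x = b"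
  by (metis absm bC jb)
lemma mb2[simp]: "x \<in> C \<Longrightarrow> m x b = b"
  by (metis mb mcomm bC)
lemma jt[simp]: "x \<in> C \<Longrightarrow> j t x = t"
  by (metis absj tC mt)
lemma jt2[simp]: "x \<in> C \<Longrightarrow> j x t = t"
  by (metis jt jcomm tC)

lemma le_j: "x \<in> C \<Longrightarrow> y \<in> C \<Longrightarrow> m x y = x \<longleftrightarrow> j x y = y"
  by (metis absj absm jcomm mcomm)

lemma jdist: "x \<in> C \<Longrightarrow> y \<in> C \<Longrightarrow> z \<in> C \<Longrightarrow> j x (m y z) = m (j x y) (j x z)"
proof -
  assume C: "x \<in> C" "y \<in> C" "z \<in> C"
  have e1: "m (j x y) (j x z) = j (m (j x y) x) (m (j x y) z)" using C by (simp add: mdist)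
  have e2: "m (j x y) x = x" using C absm[of x y] mcomm[of "j x y" x] by simp
  have e3: "m (j x y) z = j (m x z) (m y z)"
  proof -
    have "m (j x y) z = m z (j x y)" using C mcomm by simp
    also have "\<dots> = j (m z x) (m z y)" using C mdist by simp
    finally show ?thesis using C mcomm by simp
  qed
  have e4: "j x (j (m x z) (m y z)) = j (j x (m x z)) (m y z)" using C by (simp add: jassoc)
  have e5: "j x (m x z) = x" using C by (simp add: absj)
  have "m (j x y) (j x z) = j x (m y z)" unfolding e1 e2 e3 e4 e5 ..
  then show ?thesis by (rule sym)
qed

lemma mdist2: "x \<in> C \<Longrightarrow> y \<in> C \<Longrightarrow> z \<in> C \<Longrightarrow> m (j y z) x = j (m y x) (m z x)"
  using mcomm[of x "j y z"] mdist[of x y z] mcomm[of x y] mcomm[of x z] by simp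
lemma jdist2: "x \<in> C \<Longrightarrow> y \<in> C \<Longrightarrow> z \<in> C \<Longrightarrow> j (m y z) x = m (j y x) (j z x)"
  using jcomm[of x "m y z"] jdist[of x y z] jcomm[of x y] jcomm[of x z] by simp

lemma mlc: "x \<in> C \<Longrightarrow> y \<in> C \<Longrightarrow> z \<in> C \<Longrightarrow> m x (m y z) = m y (m x z)"
  using massoc[of x y z] massoc[of y x z] mcomm[of x y] by simp
lemma jlc: "x \<in> C \<Longrightarrow> y \<in> C \<Longrightarrow> z \<in> C \<Longrightarrow> j x (j y z) = j y (j x z)"
  using jassoc[of x y z] jassoc[of y x z] jcomm[of x y] by simp

lemmas mAC = massoc mcomm mlc
lemmas jAC = jassoc jcomm jlc

definition le :: "'a \<Rightarrow> 'a \<Rightarrow> bool" where "le x y \<longleftrightarrow> m x y = x"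

lemma le_refl[simp]: "x \<in> C \<Longrightarrow> le x x" by (simp add: le_def)
lemma le_trans: "x \<in> C \<Longrightarrow> y \<in> C \<Longrightarrow> z \<in> C \<Longrightarrow> le x y \<Longrightarrow> le y z \<Longrightarrow> le x z"
  unfolding le_def by (metis massoc)
lemma le_antisym: "x \<in> C \<Longrightarrow> y \<in> C \<Longrightarrow> le x y \<Longrightarrow> le y x \<Longrightarrow> x = y"
  unfolding le_def by (metis mcomm)
lemma le_m1[simp]: "x \<in> C \<Longrightarrow> y \<in> C \<Longrightarrow> le (m x y) x"
  unfolding le_def by (metis massoc mcomm mid)
lemma le_m2[simp]: "x \<in> C \<Longrightarrow> y \<in> C \<Longrightarrow> le (m x y) y"
  unfolding le_def by (metis massoc mid)
lemma le_j1[simp]: "x \<in> C \<Longrightarrow> y \<in> C \<Longrightarrow> le x (j x y)"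
  unfolding le_def by (simp add: absm)
lemma le_j2[simp]: "x \<in> C \<Longrightarrow> y \<in> C \<Longrightarrow> le y (j x y)"
  unfolding le_def by (metis absm jcomm)
lemma le_mI: "x \<in> C \<Longrightarrow> y \<in> C \<Longrightarrow> z \<in> C \<Longrightarrow> le z x \<Longrightarrow> le z y \<Longrightarrow> le z (m x y)"
  unfolding le_def by (metis massoc)
lemma le_jI: "x \<in> C \<Longrightarrow> y \<in> C \<Longrightarrow> z \<in> C \<Longrightarrow> le x z \<Longrightarrow> le y z \<Longrightarrow> le (j x y) z"
  unfolding le_def by (metis jassoc le_j jC)
lemma le_b[simp]: "x \<in> C \<Longrightarrow> le b x" unfolding le_def by simp
lemma le_t[simp]: "x \<in> C \<Longrightarrow> le x t" unfolding le_def by simp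
lemma le_jiff: "x \<in> C \<Longrightarrow> y \<in> C \<Longrightarrow> le x y \<longleftrightarrow> j x y = y"
  unfolding le_def by (rule le_j)
lemma le_mono_m: "x \<in> C \<Longrightarrow> y \<in> C \<Longrightarrow> x' \<in> C \<Longrightarrow> y' \<in> C \<Longrightarrow> le x x' \<Longrightarrow> le y y' \<Longrightarrow> le (m x y) (m x' y')"
  by (meson le_m1 le_m2 le_mI le_trans mC)
lemma le_mono_j: "x \<in> C \<Longrightarrow> y \<in> C \<Longrightarrow> x' \<in> C \<Longrightarrow> y' \<in> C \<Longrightarrow> le x x' \<Longrightarrow> le y y' \<Longrightarrow> le (j x y) (j x' y')"
  by (meson le_j1 le_j2 le_jI le_trans jC)
lemma le_m_iff: "x \<in> C \<Longrightarrow> y \<in> C \<Longrightarrow> z \<in> C \<Longrightarrow> le z (m x y) \<longleftrightarrow> le z x \<and> le z y"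
  by (meson le_m1 le_m2 le_mI le_trans mC)
lemma le_j_iff: "x \<in> C \<Longrightarrow> y \<in> C \<Longrightarrow> z \<in> C \<Longrightarrow> le (j x y) z \<longleftrightarrow> le x z \<and> le y z"
  by (meson le_j1 le_j2 le_jI le_trans jC)

lemma dual: "DLat C j m t b"
  unfolding DLat_def bdl_def
  by (auto simp: absm absj jdist jassoc massoc intro: jcomm mcomm)

definition pf :: "'a set \<Rightarrow> bool" where
  "pf P \<longleftrightarrow> P \<subseteq> C \<and> t \<in> P \<and> b \<notin> P \<and> (\<forall>x\<in>P. \<forall>y\<in>P. m x y \<in> P) \<and>
    (\<forall>x\<in>P. \<forall>y\<in>C. m x y = x \<longrightarrow> y \<in> P) \<and> (\<forall>x\<in>C. \<forall>y\<in>C. j x y \<in> P \<longrightarrow> x \<in> P \<or> y \<in> P)"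

definition filt :: "'a set \<Rightarrow> bool" where
  "filt F \<longleftrightarrow> F \<subseteq> C \<and> F \<noteq> {} \<and> (\<forall>x\<in>F. \<forall>y\<in>F. m x y \<in> F) \<and> (\<forall>x\<in>F. \<forall>y\<in>C. le x y \<longrightarrow> y \<in> F)"
definition idl :: "'a set \<Rightarrow> bool" where
  "idl I \<longleftrightarrow> I \<subseteq> C \<and> I \<noteq> {} \<and> (\<forall>x\<in>I. \<forall>y\<in>I. j x y \<in> I) \<and> (\<forall>x\<in>I. \<forall>y\<in>C. le y x \<longrightarrow> y \<in> I)"

lemma gpft:
  fixes \<rho> :: "'a \<Rightarrow> 'a \<Rightarrow> bool" and F I :: "'a set"
  assumes rle: "\<And>x y. x \<in> C \<Longrightarrow> y \<in> C \<Longrightarrow> le x y \<Longrightarrow> \<rho> x y"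
    and rtr: "\<And>x y z. x \<in> C \<Longrightarrow> y \<in> C \<Longrightarrow> z \<in> C \<Longrightarrow> \<rho> x y \<Longrightarrow> \<rho> y z \<Longrightarrow> \<rho> x z"
    and rm: "\<And>x y z. x \<in> C \<Longrightarrow> y \<in> C \<Longrightarrow> z \<in> C \<Longrightarrow> \<rho> x y \<Longrightarrow> \<rho> x z \<Longrightarrow> \<rho> x (m y z)"
    and rj: "\<And>x y z. x \<in> C \<Longrightarrow> y \<in> C \<Longrightarrow> z \<in> C \<Longrightarrow> \<rho> x z \<Longrightarrow> \<rho> y z \<Longrightarrow> \<rho> (j x y) z"
    and F: "filt F" and I: "idl I"
    and FI: "\<And>x y. x \<in> F \<Longrightarrow> y \<in> I \<Longrightarrow> \<not> \<rho> x y"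
  shows "\<exists>Q. pf Q \<and> F \<subseteq> Q \<and> Q \<inter> I = {} \<and> (\<forall>x\<in>C. \<forall>y\<in>C. \<rho> x y \<longrightarrow> x \<in> Q \<longrightarrow> y \<in> Q)"
proof -
  define Fam where "Fam = {Q. Q \<subseteq> C \<and> (\<forall>x\<in>Q. \<forall>y\<in>Q. m x y \<in> Q) \<and> (\<forall>x\<in>Q. \<forall>y\<in>C. le x y \<longrightarrow> y \<in> Q)
      \<and> F \<subseteq> Q \<and> (\<forall>x\<in>Q. \<forall>y\<in>I. \<not> \<rho> x y)}"
  have FFam: "F \<in> Fam" using F FI unfolding Fam_def filt_def by auto
  have "\<exists>M\<in>Fam. \<forall>X\<in>Fam. M \<subseteq> X \<longrightarrow> X = M"
  proof (rule subset_Zorn)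
    fix Ch assume ch: "subset.chain Fam Ch"
    show "\<exists>U\<in>Fam. \<forall>X\<in>Ch. X \<subseteq> U"
    proof (cases "Ch = {}")
      case True then show ?thesis using FFam by auto
    next
      case False
      have sub: "Ch \<subseteq> Fam" and lin: "\<And>X Y. X \<in> Ch \<Longrightarrow> Y \<in> Ch \<Longrightarrow> X \<subseteq> Y \<or> Y \<subseteq> X"
        using ch unfolding subset.chain_def by auto
      have "\<Union>Ch \<in> Fam"
        unfolding Fam_def
      proof (intro CollectI conjI ballI impI)
        show "\<Union>Ch \<subseteq> C" using sub unfolding Fam_def by auto
        show "F \<subseteq> \<Union>Ch" using sub False unfolding Fam_def by auto
      next
        fix x y assume "x \<in> \<Union>Ch" "y \<in> \<Union>Ch"
        then obtain X Y where "X \<in> Ch" "Y \<in> Ch" "x \<in> X" "y \<in> Y" by auto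
        then have "(x \<in> Y \<and> y \<in> Y \<and> Y \<in> Ch) \<or> (x \<in> X \<and> y \<in> X \<and> X \<in> Ch)" using lin[of X Y] by blast
        then show "m x y \<in> \<Union>Ch"
        proof
          assume a: "x \<in> Y \<and> y \<in> Y \<and> Y \<in> Ch"
          then have "Y \<in> Fam" using sub by blast
          then have "m x y \<in> Y" using a unfolding Fam_def by blast
          then show ?thesis using a by blast
        next
          assume a: "x \<in> X \<and> y \<in> X \<and> X \<in> Ch"
          then have "X \<in> Fam" using sub by blast
          then have "m x y \<in> X" using a unfolding Fam_def by blast
          then show ?thesis using a by blast
        qed
      next
        fix x y assume "x \<in> \<Union>Ch" "y \<in> C" "le x y"
        then show "y \<in> \<Union>Ch" using sub unfolding Fam_def by blast
      next
        fix x y assume "x \<in> \<Union>Ch" "y \<in> I"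
        then show "\<not> \<rho> x y" using sub unfolding Fam_def by blast
      qed
      then show ?thesis by auto
    qed
  qed
  then obtain M where MF: "M \<in> Fam" and Mmax: "\<And>X. X \<in> Fam \<Longrightarrow> M \<subseteq> X \<Longrightarrow> X = M" by blast
  have MC: "M \<subseteq> C" and Mm: "\<And>x y. x \<in> M \<Longrightarrow> y \<in> M \<Longrightarrow> m x y \<in> M"
    and Mup: "\<And>x y. x \<in> M \<Longrightarrow> y \<in> C \<Longrightarrow> le x y \<Longrightarrow> y \<in> M"
    and FM: "F \<subseteq> M" and MI: "\<And>x y. x \<in> M \<Longrightarrow> y \<in> I \<Longrightarrow> \<not> \<rho> x y"
    using MF unfolding Fam_def by auto
  have FC: "F \<subseteq> C" and IC: "I \<subseteq> C" using F I unfolding filt_def idl_def by auto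
  have clos: "y \<in> M" if "x \<in> M" "y \<in> C" "\<rho> x y" for x y
  proof -
    define M' where "M' = {z \<in> C. \<exists>q\<in>M. \<rho> q z}"
    have "M' \<in> Fam" unfolding Fam_def
    proof (intro CollectI conjI ballI impI)
      show "M' \<subseteq> C" unfolding M'_def by auto
      show "F \<subseteq> M'" unfolding M'_def using FM MC FC rle by (auto intro!: bexI)
    next
      fix u v assume "u \<in> M'" "v \<in> M'"
      then obtain q q' where q: "q \<in> M" "\<rho> q u" "q' \<in> M" "\<rho> q' v" "u \<in> C" "v \<in> C" unfolding M'_def by auto
      have qC: "q \<in> C" "q' \<in> C" using q MC by auto
      have "\<rho> (m q q') u" using rtr[OF _ _ _ rle[of "m q q'" q] q(2)] qC q by simp
      moreover have "\<rho> (m q q') v" using rtr[OF _ _ _ rle[of "m q q'" q'] q(4)] qC q by simp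
      ultimately have "\<rho> (m q q') (m u v)" using rm qC q by simp
      moreover have "m q q' \<in> M" using Mm q by blast
      moreover have "m u v \<in> C" using q by simp
      ultimately show "m u v \<in> M'" unfolding M'_def by blast
    next
      fix u v assume u: "u \<in> M'" "v \<in> C" "le u v"
      then obtain q where q: "q \<in> M" "\<rho> q u" "u \<in> C" unfolding M'_def by blast
      have "\<rho> u v" using rle u q by blast
      then have "\<rho> q v" using rtr[of q u v] q u MC by blast
      then show "v \<in> M'" unfolding M'_def using q u by blast
    next
      fix u v assume u: "u \<in> M'" "v \<in> I"
      then obtain q where q: "q \<in> M" "\<rho> q u" "u \<in> C" unfolding M'_def by blast
      show "\<not> \<rho> u v"
      proof
        assume "\<rho> u v"
        then have "\<rho> q v" using rtr[of q u v] q u MC IC by blast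
        then show False using MI q u by blast
      qed
    qed
    moreover have "M \<subseteq> M'"
    proof
      fix x assume "x \<in> M"
      moreover then have "x \<in> C" using MC by blast
      moreover then have "\<rho> x x" using rle le_refl by blast
      ultimately show "x \<in> M'" unfolding M'_def by blast
    qed
    ultimately have "M' = M" using Mmax by auto
    then show ?thesis using that MC unfolding M'_def by auto
  qed
  obtain f0 where f0: "f0 \<in> F" using F unfolding filt_def by auto
  obtain i0 where i0: "i0 \<in> I" using I unfolding idl_def by auto
  have f0C: "f0 \<in> C" using f0 FC by blast
  have tM: "t \<in> M" using Mup[OF _ tC le_t[OF f0C]] f0 FM by blast
  have bI: "b \<in> I" using I i0 IC unfolding idl_def by auto
  have bM: "b \<notin> M" using MI[of b b] bI rle[of b b] by auto
  have prime: "x \<in> M \<or> y \<in> M" if xy: "x \<in> C" "y \<in> C" "j x y \<in> M" for x y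
  proof (rule ccontr)
    assume nxy: "\<not> (x \<in> M \<or> y \<in> M)"
    have ext: "\<exists>q\<in>M. \<exists>i\<in>I. \<rho> (m q z) i" if zC: "z \<in> C" "z \<notin> M" "j x y \<in> M" "le z (j x y)" for z
    proof (rule ccontr)
      assume nex: "\<not> ?thesis"
      define Mz where "Mz = {w \<in> C. \<exists>q\<in>M. le (m q z) w}"
      have Mzi: "w \<in> Mz" if "w \<in> C" "q \<in> M" "le (m q z) w" for w q
        unfolding Mz_def using that by blast
      have Mzs: "w \<in> M \<Longrightarrow> w \<in> Mz" for w
        using Mzi[of w w] MC zC by (meson le_m1 subsetD)
      have "Mz \<in> Fam" unfolding Fam_def
      proof (intro CollectI conjI ballI impI)
        show "Mz \<subseteq> C" unfolding Mz_def by blast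
        show "F \<subseteq> Mz" using FM Mzs by blast
      next
        fix u v assume "u \<in> Mz" "v \<in> Mz"
        then obtain q q' where q: "q \<in> M" "le (m q z) u" "q' \<in> M" "le (m q' z) v" "u \<in> C" "v \<in> C"
          unfolding Mz_def by blast
        have qC: "q \<in> C" "q' \<in> C" using q MC by auto
        have "le (m (m q q') z) u"
          by (rule le_trans[OF _ _ _ _ q(2)]) (use qC zC q in \<open>auto intro: le_mono_m\<close>)
        moreover have "le (m (m q q') z) v"
          by (rule le_trans[OF _ _ _ _ q(4)]) (use qC zC q in \<open>auto intro: le_mono_m\<close>)
        ultimately have "le (m (m q q') z) (m u v)" using q qC zC by (intro le_mI) auto
        moreover have "m q q' \<in> M" using Mm q by blast
        ultimately show "m u v \<in> Mz" using Mzi[of "m u v" "m q q'"] q by simp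
      next
        fix u v assume u: "u \<in> Mz" "v \<in> C" "le u v"
        then obtain q where q: "q \<in> M" "le (m q z) u" "u \<in> C" unfolding Mz_def by blast
        have "q \<in> C" using q MC by blast
        then have "le (m q z) v" using le_trans[OF _ _ _ q(2) u(3)] q u zC by simp
        then show "v \<in> Mz" using Mzi[of v q] q u by blast
      next
        fix u v assume u: "u \<in> Mz" "v \<in> I"
        then obtain q where q: "q \<in> M" "le (m q z) u" "u \<in> C" unfolding Mz_def by blast
        have qC: "q \<in> C" "v \<in> C" using q MC u IC by auto
        show "\<not> \<rho> u v"
        proof
          assume "\<rho> u v"
          moreover have "\<rho> (m q z) u" using rle[OF _ _ q(2)] qC zC q by simp
          ultimately have "\<rho> (m q z) v" using rtr[of "m q z" u v] qC zC q by simp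
          then show False using nex q u by blast
        qed
      qed
      moreover have "M \<subseteq> Mz" using Mzs by blast
      moreover have "z \<in> Mz" using Mzi[of z t] tM zC by simp
      ultimately show False using Mmax zC by blast
    qed
    have jM: "j x y \<in> C" using xy by simp
    obtain q i where qi: "q \<in> M" "i \<in> I" "\<rho> (m q x) i"
      using ext[of x] nxy xy by auto
    obtain q' i' where qi': "q' \<in> M" "i' \<in> I" "\<rho> (m q' y) i'"
      using ext[of y] nxy xy by auto
    have C': "q \<in> C" "q' \<in> C" "i \<in> C" "i' \<in> C" using qi qi' MC IC by auto
    have jI: "j i i' \<in> I" using I qi qi' unfolding idl_def by auto
    let ?q = "m q q'" and ?i = "j i i'"
    have r1: "\<rho> (m ?q x) ?i"
    proof -
      have "\<rho> (m ?q x) (m q x)" using C' xy by (intro rle) (auto intro: le_mono_m)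
      moreover have "\<rho> i ?i" using C' by (intro rle) auto
      ultimately show ?thesis using rtr[of "m ?q x" "m q x" i] rtr[of "m ?q x" i ?i] qi C' xy by simp
    qed
    have r2: "\<rho> (m ?q y) ?i"
    proof -
      have "\<rho> (m ?q y) (m q' y)" using C' xy by (intro rle) (auto intro: le_mono_m)
      moreover have "\<rho> i' ?i" using C' by (intro rle) auto
      ultimately show ?thesis using rtr[of "m ?q y" "m q' y" i'] rtr[of "m ?q y" i' ?i] qi' C' xy by simp
    qed
    have "\<rho> (j (m ?q x) (m ?q y)) ?i" using rj[OF _ _ _ r1 r2] C' xy by simp
    moreover have "j (m ?q x) (m ?q y) = m ?q (j x y)" using C' xy by (simp add: mdist)
    moreover have "m ?q (j x y) \<in> M" using Mm qi qi' xy by simp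
    ultimately show False using MI[of "m ?q (j x y)" ?i] jI by simp
  qed
  have "pf M" unfolding pf_def using MC tM bM Mm Mup prime unfolding le_def by blast
  moreover have "M \<inter> I = {}"
  proof -
    have "x \<notin> I" if "x \<in> M" for x
    proof
      assume "x \<in> I"
      moreover have "\<rho> x x" using rle[of x x] that MC by auto
      ultimately show False using MI that by blast
    qed
    then show ?thesis by blast
  qed
  ultimately show ?thesis using FM clos by blast
qed

end



context DLat begin

lemma pfD: assumes "pf P"
  shows "P \<subseteq> C" "t \<in> P" "b \<notin> P"
  and "x \<in> C \<Longrightarrow> y \<in> C \<Longrightarrow> m x y \<in> P \<longleftrightarrow> x \<in> P \<and> y \<in> P"
  and "x \<in> C \<Longrightarrow> y \<in> C \<Longrightarrow> j x y \<in> P \<longleftrightarrow> x \<in> P \<or> y \<in> P"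
  and "x \<in> P \<Longrightarrow> y \<in> C \<Longrightarrow> le x y \<Longrightarrow> y \<in> P"
proof -
  have P: "P \<subseteq> C" "t \<in> P" "b \<notin> P" "\<And>x y. x\<in>P \<Longrightarrow> y\<in>P \<Longrightarrow> m x y \<in> P"
    "\<And>x y. x\<in>P \<Longrightarrow> y\<in>C \<Longrightarrow> m x y = x \<Longrightarrow> y \<in> P"
    "\<And>x y. x\<in>C \<Longrightarrow> y\<in>C \<Longrightarrow> j x y \<in> P \<Longrightarrow> x \<in> P \<or> y \<in> P"
    using assms unfolding pf_def by blast+
  show "P \<subseteq> C" "t \<in> P" "b \<notin> P" using P by blast+
  have up: "\<And>x y. x \<in> P \<Longrightarrow> y \<in> C \<Longrightarrow> le x y \<Longrightarrow> y \<in> P" using P(5) unfolding le_def by blast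
  show "x \<in> P \<Longrightarrow> y \<in> C \<Longrightarrow> le x y \<Longrightarrow> y \<in> P" using up by blast
  show "x \<in> C \<Longrightarrow> y \<in> C \<Longrightarrow> m x y \<in> P \<longleftrightarrow> x \<in> P \<and> y \<in> P"
    using P(4) up[of "m x y" x] up[of "m x y" y] by auto
  show "x \<in> C \<Longrightarrow> y \<in> C \<Longrightarrow> j x y \<in> P \<longleftrightarrow> x \<in> P \<or> y \<in> P"
    using P(6) up[of x "j x y"] up[of y "j x y"] by auto
qed

lemma pf_up: "pf P \<Longrightarrow> x \<in> P \<Longrightarrow> y \<in> C \<Longrightarrow> le x y \<Longrightarrow> y \<in> P"
  using pfD(6) by blast
lemma pf_C: "pf P \<Longrightarrow> x \<in> P \<Longrightarrow> x \<in> C"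
  using pfD(1) by blast
lemma pf_m[simp]: "pf P \<Longrightarrow> x \<in> C \<Longrightarrow> y \<in> C \<Longrightarrow> m x y \<in> P \<longleftrightarrow> x \<in> P \<and> y \<in> P"
  using pfD(4) by blast
lemma pf_j[simp]: "pf P \<Longrightarrow> x \<in> C \<Longrightarrow> y \<in> C \<Longrightarrow> j x y \<in> P \<longleftrightarrow> x \<in> P \<or> y \<in> P"
  using pfD(5) by blast
lemma pf_t[simp]: "pf P \<Longrightarrow> t \<in> P" using pfD(2) by blast
lemma pf_b[simp]: "pf P \<Longrightarrow> b \<notin> P" using pfD(3) by blast

definition bigM :: "'a list \<Rightarrow> 'a" where "bigM xs = foldr m xs t"
definition bigJ :: "'a list \<Rightarrow> 'a" where "bigJ xs = foldr j xs b"

lemma bigM_simps[simp]: "bigM [] = t" "bigM (x # xs) = m x (bigM xs)"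
  by (simp_all add: bigM_def)
lemma bigJ_simps[simp]: "bigJ [] = b" "bigJ (x # xs) = j x (bigJ xs)"
  by (simp_all add: bigJ_def)
lemma bigM_C[simp]: "set xs \<subseteq> C \<Longrightarrow> bigM xs \<in> C"
  by (induction xs) auto
lemma bigJ_C[simp]: "set xs \<subseteq> C \<Longrightarrow> bigJ xs \<in> C"
  by (induction xs) auto
lemma bigM_app: "set xs \<subseteq> C \<Longrightarrow> set ys \<subseteq> C \<Longrightarrow> bigM (xs @ ys) = m (bigM xs) (bigM ys)"
  by (induction xs) (auto simp: massoc)
lemma bigJ_app: "set xs \<subseteq> C \<Longrightarrow> set ys \<subseteq> C \<Longrightarrow> bigJ (xs @ ys) = j (bigJ xs) (bigJ ys)"
  by (induction xs) (auto simp: jassoc)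
lemma bigM_pf: "pf P \<Longrightarrow> set xs \<subseteq> C \<Longrightarrow> bigM xs \<in> P \<longleftrightarrow> set xs \<subseteq> P"
  by (induction xs) auto
lemma bigJ_pf: "pf P \<Longrightarrow> set xs \<subseteq> C \<Longrightarrow> bigJ xs \<in> P \<longleftrightarrow> (\<exists>x\<in>set xs. x \<in> P)"
  by (induction xs) auto

lemma filt_up: assumes "a \<in> C" shows "filt {x\<in>C. le a x}"
  unfolding filt_def
proof (intro conjI ballI impI)
  show "{x \<in> C. le a x} \<subseteq> C" by blast
  show "{x \<in> C. le a x} \<noteq> {}" using assms le_refl by blast
next
  fix x y assume "x \<in> {x \<in> C. le a x}" "y \<in> {x \<in> C. le a x}"
  then show "m x y \<in> {x \<in> C. le a x}" using le_mI[of x y a] assms by simp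
next
  fix x y assume "x \<in> {x \<in> C. le a x}" "y \<in> C" "le x y"
  then show "y \<in> {x \<in> C. le a x}" using le_trans[of a x y] assms by simp
qed

lemma idl_down: assumes "a \<in> C" shows "idl {x\<in>C. le x a}"
  unfolding idl_def
proof (intro conjI ballI impI)
  show "{x \<in> C. le x a} \<subseteq> C" by blast
  show "{x \<in> C. le x a} \<noteq> {}" using assms le_refl by blast
next
  fix x y assume "x \<in> {x \<in> C. le x a}" "y \<in> {x \<in> C. le x a}"
  then show "j x y \<in> {x \<in> C. le x a}" using le_jI[of x y a] assms by simp
next
  fix x y assume "x \<in> {x \<in> C. le x a}" "y \<in> C" "le y x"
  then show "y \<in> {x \<in> C. le x a}" using le_trans[of y x a] assms by simp
qed

lemma pft: assumes "a \<in> C" "b' \<in> C" "\<not> le a b'"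
  shows "\<exists>Q. pf Q \<and> a \<in> Q \<and> b' \<notin> Q"
proof -
  have "\<exists>Q. pf Q \<and> {x\<in>C. le a x} \<subseteq> Q \<and> Q \<inter> {x\<in>C. le x b'} = {} \<and> (\<forall>x\<in>C. \<forall>y\<in>C. le x y \<longrightarrow> x \<in> Q \<longrightarrow> y \<in> Q)"
  proof (rule gpft[of le])
    show "filt {x \<in> C. le a x}" using filt_up assms by simp
    show "idl {x \<in> C. le x b'}" using idl_down assms by simp
    show "\<And>x y. x \<in> {x \<in> C. le a x} \<Longrightarrow> y \<in> {x \<in> C. le x b'} \<Longrightarrow> \<not> le x y"
    proof -
      fix x y assume "x \<in> {x \<in> C. le a x}" "y \<in> {x \<in> C. le x b'}"
      then show "\<not> le x y" using le_trans[of a x y] le_trans[of a y b'] assms by auto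
    qed
  next
    fix x y z assume "x \<in> C" "y \<in> C" "z \<in> C" "le x y" "le y z" then show "le x z" using le_trans by blast
  next
    fix x y z assume "x \<in> C" "y \<in> C" "z \<in> C" "le x y" "le x z" then show "le x (m y z)" using le_mI by blast
  next
    fix x y z assume "x \<in> C" "y \<in> C" "z \<in> C" "le x z" "le y z" then show "le (j x y) z" using le_jI by blast
  qed simp
  then obtain Q where Q: "pf Q" "{x\<in>C. le a x} \<subseteq> Q" "Q \<inter> {x\<in>C. le x b'} = {}" by blast
  have "a \<in> {x\<in>C. le a x}" "b' \<in> {x\<in>C. le x b'}" using assms by simp_all
  then show ?thesis using Q by blast
qed

lemma pf_dual: assumes "DLat.pf C j m t b Q" shows "pf (C - Q)"
proof -
  interpret D: DLat C j m t b by (rule dual)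
  have Q: "Q \<subseteq> C" "b \<in> Q" "t \<notin> Q" "\<And>x y. x\<in>Q \<Longrightarrow> y\<in>Q \<Longrightarrow> j x y \<in> Q"
    "\<And>x y. x\<in>Q \<Longrightarrow> y\<in>C \<Longrightarrow> j x y = x \<Longrightarrow> y \<in> Q"
    "\<And>x y. x\<in>C \<Longrightarrow> y\<in>C \<Longrightarrow> m x y \<in> Q \<Longrightarrow> x \<in> Q \<or> y \<in> Q"
    using assms unfolding D.pf_def by blast+
  show ?thesis unfolding pf_def
  proof (intro conjI ballI impI)
    show "C - Q \<subseteq> C" "t \<in> C - Q" "b \<notin> C - Q" using Q by auto
  next
    fix x y assume "x \<in> C - Q" "y \<in> C - Q" then show "m x y \<in> C - Q" using Q(6) by auto
  next
    fix x y assume xy: "x \<in> C - Q" "y \<in> C" "m x y = x"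
    show "y \<in> C - Q"
    proof (rule ccontr)
      assume "y \<notin> C - Q"
      then have "y \<in> Q" using xy by auto
      moreover have "j y x = y" using xy le_j[of x y] jcomm[of x y] by simp
      ultimately show False using Q(5)[of y x] xy by auto
    qed
  next
    fix x y assume "x \<in> C" "y \<in> C" "j x y \<in> C - Q" then show "x \<in> C - Q \<or> y \<in> C - Q"
      using Q(4) by auto
  qed
qed

end

locale WHB =
  fixes A :: "('a, 'z) whb_scheme"
  assumes W: "whb_algebra A"
begin

sublocale DLat "wcar A" "wmeet A" "wjoin A" "wbot A" "wtop A"
  using W unfolding whb_algebra_def DLat_def by blast

abbreviation "CA \<equiv> wcar A"
abbreviation "imp \<equiv> wimp A"
abbreviation "cimp \<equiv> wcoimp A"

lemma wle_le: "wle A x y = le x y" unfolding wle_def le_def by simp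

lemma pfA: "prime_filter A P \<longleftrightarrow> pf P"
  unfolding prime_filter_def pf_def wle_def by blast

lemma iC[simp]: "x \<in> CA \<Longrightarrow> y \<in> CA \<Longrightarrow> imp x y \<in> CA"
  and cC[simp]: "x \<in> CA \<Longrightarrow> y \<in> CA \<Longrightarrow> cimp x y \<in> CA"
  using W unfolding whb_algebra_def by blast+

lemma ax:
  assumes "a \<in> CA" "b' \<in> CA" "c \<in> CA"
  shows "imp a a = wtop A"
  "imp a (wmeet A b' c) = wmeet A (imp a b') (imp a c)"
  "imp (wjoin A a b') c = wmeet A (imp a c) (imp b' c)"
  "le (wmeet A (imp a b') (imp b' c)) (imp a c)"
  "cimp a a = wbot A"
  "cimp (wjoin A a b') c = wjoin A (cimp a c) (cimp b' c)"
  "cimp a (wmeet A b' c) = wjoin A (cimp a b') (cimp a c)"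
  "le (cimp a c) (wjoin A (cimp a b') (cimp b' c))"
  "le (wmeet A a (cimp (imp a b') (wbot A))) b'"
  "le a (wjoin A b' (imp (wtop A) (cimp a b')))"
  using W assms unfolding whb_algebra_def wle_le by blast+

lemma i_le: assumes "x \<in> CA" "y \<in> CA" "le x y" shows "imp x y = wtop A"
proof -
  have "imp x x = imp x (wmeet A x y)" using assms unfolding le_def by simp
  also have "\<dots> = wmeet A (imp x x) (imp x y)" using ax(2) assms by simp
  finally show ?thesis using ax(1) assms by simp
qed

lemma c_le: assumes "x \<in> CA" "y \<in> CA" "le x y" shows "cimp x y = wbot A"
proof -
  have "cimp y y = cimp (wjoin A x y) y" using assms le_jiff by simp
  also have "\<dots> = wjoin A (cimp x y) (cimp y y)" using ax(6) assms by simp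
  finally show ?thesis using ax(5) assms by simp
qed

lemma i_mono2: assumes "x \<in> CA" "y \<in> CA" "y' \<in> CA" "le y y'" shows "le (imp x y) (imp x y')"
proof -
  have "imp x y = imp x (wmeet A y y')" using assms unfolding le_def by simp
  also have "\<dots> = wmeet A (imp x y) (imp x y')" using ax(2) assms by simp
  finally show ?thesis unfolding le_def by simp
qed

lemma i_anti1: assumes "x \<in> CA" "x' \<in> CA" "y \<in> CA" "le x x'" shows "le (imp x' y) (imp x y)"
proof -
  have "imp x' y = imp (wjoin A x x') y" using assms le_jiff by simp
  also have "\<dots> = wmeet A (imp x y) (imp x' y)" using ax(3) assms by simp
  finally show ?thesis unfolding le_def using mcomm assms by simp
qed

lemma c_mono1: assumes "x \<in> CA" "x' \<in> CA" "y \<in> CA" "le x x'" shows "le (cimp x y) (cimp x' y)"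
proof -
  have "cimp x' y = cimp (wjoin A x x') y" using assms le_jiff by simp
  also have "\<dots> = wjoin A (cimp x y) (cimp x' y)" using ax(6) assms by simp
  finally show ?thesis using le_jiff assms by simp
qed

lemma c_anti2: assumes "x \<in> CA" "y \<in> CA" "y' \<in> CA" "le y y'" shows "le (cimp x y') (cimp x y)"
proof -
  have "cimp x y = cimp x (wmeet A y y')" using assms unfolding le_def by simp
  also have "\<dots> = wjoin A (cimp x y) (cimp x y')" using ax(7) assms by simp
  finally show ?thesis using le_jiff[of "cimp x y'" "cimp x y"] jcomm assms by simp
qed

abbreviation "XA \<equiv> Xsp A"

lemma XA: "P \<in> XA \<longleftrightarrow> pf P" unfolding Xsp_def pfA by simp

lemma KL1: assumes P: "P \<in> XA" and ab: "a \<in> CA" "b' \<in> CA"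
  shows "imp a b' \<in> P \<longleftrightarrow> (\<forall>Q. (P, Q) \<in> Rrel A \<longrightarrow> a \<in> Q \<longrightarrow> b' \<in> Q)"
proof
  assume "imp a b' \<in> P" then show "\<forall>Q. (P, Q) \<in> Rrel A \<longrightarrow> a \<in> Q \<longrightarrow> b' \<in> Q"
    unfolding Rrel_def using ab by blast
next
  assume H: "\<forall>Q. (P, Q) \<in> Rrel A \<longrightarrow> a \<in> Q \<longrightarrow> b' \<in> Q"
  show "imp a b' \<in> P"
  proof (rule ccontr)
    assume nab: "imp a b' \<notin> P"
    have pP: "pf P" using P XA by simp
    let ?r = "\<lambda>x y. imp x y \<in> P"
    have "\<exists>Q. pf Q \<and> {x\<in>CA. le a x} \<subseteq> Q \<and> Q \<inter> {x\<in>CA. le x b'} = {} \<and> (\<forall>x\<in>CA. \<forall>y\<in>CA. ?r x y \<longrightarrow> x \<in> Q \<longrightarrow> y \<in> Q)"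
    proof (rule gpft[of ?r])
      show "filt {x \<in> CA. le a x}" using filt_up ab by simp
      show "idl {x \<in> CA. le x b'}" using idl_down ab by simp
    next
      fix x y assume "x \<in> CA" "y \<in> CA" "le x y" then show "?r x y" using i_le pP by simp
    next
      fix x y z assume C: "x \<in> CA" "y \<in> CA" "z \<in> CA" "?r x y" "?r y z"
      then have "wmeet A (imp x y) (imp y z) \<in> P" using pP by simp
      then show "?r x z" using pf_up[OF pP _ _ ax(4)[of x y z]] C by simp
    next
      fix x y z assume C: "x \<in> CA" "y \<in> CA" "z \<in> CA" "?r x y" "?r x z"
      then show "?r x (wmeet A y z)" using pP ax(2) by simp
    next
      fix x y z assume C: "x \<in> CA" "y \<in> CA" "z \<in> CA" "?r x z" "?r y z"
      then show "?r (wjoin A x y) z" using pP ax(3) by simp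
    next
      fix x y assume x: "x \<in> {x \<in> CA. le a x}" and y: "y \<in> {x \<in> CA. le x b'}"
      show "\<not> ?r x y"
      proof
        assume "?r x y"
        moreover have "le (imp x y) (imp a y)" using i_anti1 x y ab by simp
        moreover have "le (imp a y) (imp a b')" using i_mono2 x y ab by simp
        ultimately have "imp a b' \<in> P" using pf_up[OF pP] le_trans[of "imp x y" "imp a y" "imp a b'"] x y ab by simp
        then show False using nab by simp
      qed
    qed
    then obtain Q where Q0: "pf Q" "{x\<in>CA. le a x} \<subseteq> Q" "Q \<inter> {x\<in>CA. le x b'} = {}" and Q3: "\<forall>x\<in>CA. \<forall>y\<in>CA. ?r x y \<longrightarrow> x \<in> Q \<longrightarrow> y \<in> Q"
      by blast
    have "a \<in> {x\<in>CA. le a x}" "b' \<in> {x\<in>CA. le x b'}" using ab by simp_all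
    then have Q: "pf Q" "a \<in> Q" "b' \<notin> Q" "\<forall>x\<in>CA. \<forall>y\<in>CA. ?r x y \<longrightarrow> x \<in> Q \<longrightarrow> y \<in> Q"
      using Q0 Q3 by blast+
    have "(P, Q) \<in> Rrel A" unfolding Rrel_def using P Q XA by auto
    then show False using H Q by blast
  qed
qed

lemma KL2: assumes P: "P \<in> XA" and ab: "a \<in> CA" "b' \<in> CA"
  shows "cimp a b' \<in> P \<longleftrightarrow> (\<exists>Q. (P, Q) \<in> Srel A \<and> a \<in> Q \<and> b' \<notin> Q)"
proof
  assume "\<exists>Q. (P, Q) \<in> Srel A \<and> a \<in> Q \<and> b' \<notin> Q" then show "cimp a b' \<in> P"
    unfolding Srel_def using ab by blast
next
  assume ab': "cimp a b' \<in> P"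
  have pP: "pf P" using P XA by simp
  interpret D: DLat CA "wjoin A" "wmeet A" "wtop A" "wbot A" by (rule dual)
  have Dle: "D.le x y \<longleftrightarrow> le y x" if "x \<in> CA" "y \<in> CA" for x y
    unfolding D.le_def using le_jiff[OF that(2,1)] jcomm[OF that] by auto
  let ?r = "\<lambda>x y. cimp y x \<notin> P"
  have "\<exists>Q. D.pf Q \<and> {x\<in>CA. le x b'} \<subseteq> Q \<and> Q \<inter> {x\<in>CA. le a x} = {} \<and> (\<forall>x\<in>CA. \<forall>y\<in>CA. ?r x y \<longrightarrow> x \<in> Q \<longrightarrow> y \<in> Q)"
  proof (rule D.gpft[of ?r])
    have "D.filt {x \<in> CA. D.le b' x}" using D.filt_up ab by simp
    moreover have "{x \<in> CA. D.le b' x} = {x \<in> CA. le x b'}" using Dle ab by auto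
    ultimately show "D.filt {x \<in> CA. le x b'}" by simp
    have "D.idl {x \<in> CA. D.le x a}" using D.idl_down ab by simp
    moreover have "{x \<in> CA. D.le x a} = {x \<in> CA. le a x}" using Dle ab by auto
    ultimately show "D.idl {x \<in> CA. le a x}" by simp
  next
    fix x y assume "x \<in> CA" "y \<in> CA" "D.le x y" then show "?r x y" using c_le pP Dle by simp
  next
    fix x y z assume C: "x \<in> CA" "y \<in> CA" "z \<in> CA" "?r x y" "?r y z"
    show "?r x z"
    proof
      assume "cimp z x \<in> P"
      then have "wjoin A (cimp z y) (cimp y x) \<in> P" using pf_up[OF pP _ _ ax(8)[of z y x]] C by simp
      then show False using C pP by simp
    qed
  next
    fix x y z assume C: "x \<in> CA" "y \<in> CA" "z \<in> CA" "?r x y" "?r x z"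
    then show "?r x (wjoin A y z)" using pP ax(6) by simp
  next
    fix x y z assume C: "x \<in> CA" "y \<in> CA" "z \<in> CA" "?r x z" "?r y z"
    then show "?r (wmeet A x y) z" using pP ax(7) by simp
  next
    fix x y assume x: "x \<in> {x \<in> CA. le x b'}" and y: "y \<in> {x \<in> CA. le a x}"
    have "le (cimp a b') (cimp y b')" using c_mono1 x y ab by simp
    moreover have "le (cimp y b') (cimp y x)" using c_anti2 x y ab by simp
    ultimately have "cimp y x \<in> P" using pf_up[OF pP] le_trans[of "cimp a b'" "cimp y b'" "cimp y x"] x y ab ab' by simp
    then show "\<not> ?r x y" by simp
  qed
  then obtain Q where Q0: "D.pf Q" "{x\<in>CA. le x b'} \<subseteq> Q" "Q \<inter> {x\<in>CA. le a x} = {}" and Q3: "\<forall>x\<in>CA. \<forall>y\<in>CA. ?r x y \<longrightarrow> x \<in> Q \<longrightarrow> y \<in> Q"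
    by blast
  have "a \<in> {x\<in>CA. le a x}" "b' \<in> {x\<in>CA. le x b'}" using ab by simp_all
  then have Q: "D.pf Q" "b' \<in> Q" "a \<notin> Q" "\<forall>x\<in>CA. \<forall>y\<in>CA. ?r x y \<longrightarrow> x \<in> Q \<longrightarrow> y \<in> Q"
    using Q0 Q3 by blast+
  have Q': "pf (CA - Q)" using pf_dual Q(1) by simp
  have "(P, CA - Q) \<in> Srel A" unfolding Srel_def using P Q Q' XA by auto
  then show "\<exists>Q. (P, Q) \<in> Srel A \<and> a \<in> Q \<and> b' \<notin> Q" using Q ab by blast
qed

lemma SR: assumes "P \<in> XA" "Q \<in> XA" shows "(P, Q) \<in> Srel A \<longleftrightarrow> (Q, P) \<in> Rrel A"
proof
  have pP: "pf P" and pQ: "pf Q" using assms XA by auto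
  assume S: "(P, Q) \<in> Srel A"
  show "(Q, P) \<in> Rrel A" unfolding Rrel_def
  proof (intro CollectI case_prodI conjI ballI impI)
    show "Q \<in> XA" "P \<in> XA" using assms by auto
    fix a b' assume ab: "a \<in> CA" "b' \<in> CA" "imp a b' \<in> Q" "a \<in> P"
    have "cimp (imp a b') (wbot A) \<in> P" using S ab pQ unfolding Srel_def by auto
    then have "wmeet A a (cimp (imp a b') (wbot A)) \<in> P" using ab pP by simp
    then show "b' \<in> P" using pf_up[OF pP _ _ ax(9)[of a b' a]] ab by simp
  qed
next
  have pP: "pf P" and pQ: "pf Q" using assms XA by auto
  assume R: "(Q, P) \<in> Rrel A"
  show "(P, Q) \<in> Srel A" unfolding Srel_def
  proof (intro CollectI case_prodI conjI ballI impI)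
    show "Q \<in> XA" "P \<in> XA" using assms by auto
    fix a b' assume ab: "a \<in> CA" "b' \<in> CA" "a \<in> Q" "b' \<notin> Q"
    have "wjoin A b' (imp (wtop A) (cimp a b')) \<in> Q" using pf_up[OF pQ _ _ ax(10)[of a b' a]] ab by simp
    then have "imp (wtop A) (cimp a b') \<in> Q" using ab pQ by simp
    moreover have "wtop A \<in> P" using pP by simp
    moreover have RR: "\<forall>x\<in>CA. \<forall>y\<in>CA. imp x y \<in> Q \<longrightarrow> x \<in> P \<longrightarrow> y \<in> P" using R unfolding Rrel_def by blast
    ultimately show "cimp a b' \<in> P" using ab RR[rule_format, of "wtop A" "cimp a b'"] by simp
  qed
qed

lemma sigma_eq: "sigma A a = {P \<in> XA. a \<in> P}" unfolding sigma_def by simp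

lemma sigma_m: "a \<in> CA \<Longrightarrow> b' \<in> CA \<Longrightarrow> sigma A (wmeet A a b') = sigma A a \<inter> sigma A b'"
  unfolding sigma_def using XA by auto
lemma sigma_j: "a \<in> CA \<Longrightarrow> b' \<in> CA \<Longrightarrow> sigma A (wjoin A a b') = sigma A a \<union> sigma A b'"
  unfolding sigma_def using XA by auto
lemma sigma_t: "sigma A (wtop A) = XA"
  unfolding sigma_def using XA by auto
lemma sigma_b: "sigma A (wbot A) = {}"
  unfolding sigma_def using XA by auto
lemma sigma_sub: "sigma A a \<subseteq> XA" unfolding sigma_def by auto

lemma sigma_le: assumes "a \<in> CA" "b' \<in> CA" "sigma A a \<subseteq> sigma A b'" shows "le a b'"
proof (rule ccontr)
  assume "\<not> le a b'"
  then obtain Q where "pf Q" "a \<in> Q" "b' \<notin> Q" using pft assms by blast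
  then show False using assms(3) unfolding sigma_def XA by auto
qed

lemma sigma_inj: assumes "a \<in> CA" "b' \<in> CA" "sigma A a = sigma A b'" shows "a = b'"
  using sigma_le[of a b'] sigma_le[of b' a] assms le_antisym by auto

end



context DLat begin

lemma pft_gen: assumes "filt F" "idl I" "\<And>x y. x \<in> F \<Longrightarrow> y \<in> I \<Longrightarrow> \<not> le x y"
  shows "\<exists>Q. pf Q \<and> F \<subseteq> Q \<and> Q \<inter> I = {}"
proof -
  have "\<exists>Q. pf Q \<and> F \<subseteq> Q \<and> Q \<inter> I = {} \<and> (\<forall>x\<in>C. \<forall>y\<in>C. le x y \<longrightarrow> x \<in> Q \<longrightarrow> y \<in> Q)"
  proof (rule gpft[of le])
    fix x y z assume "x \<in> C" "y \<in> C" "z \<in> C" "le x y" "le y z" then show "le x z" using le_trans by blast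
  next
    fix x y z assume "x \<in> C" "y \<in> C" "z \<in> C" "le x y" "le x z" then show "le x (m y z)" using le_mI by blast
  next
    fix x y z assume "x \<in> C" "y \<in> C" "z \<in> C" "le x z" "le y z" then show "le (j x y) z" using le_jI by blast
  qed (use assms in auto)
  then show ?thesis by blast
qed

end

context WHB begin

definition SB where "SB = (sigma A ` CA) \<union> ((\<lambda>a. XA - sigma A a) ` CA)"

lemma tau_eq: "tau A = topology_generated_by SB" unfolding tau_def SB_def by simp

lemma USB: "\<Union>SB = XA"
proof
  show "\<Union>SB \<subseteq> XA" unfolding SB_def sigma_def by auto
  have "XA \<in> SB" unfolding SB_def using sigma_t tC by (metis UnI1 image_eqI)
  then show "XA \<subseteq> \<Union>SB" by blast
qed

lemma topspace_tau[simp]: "topspace (tau A) = XA"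
  unfolding tau_eq topology_generated_by_topspace USB ..

lemma open_tau: "openin (tau A) U \<longleftrightarrow> generate_topology_on SB U"
  unfolding tau_eq by (rule openin_topology_generated_by_iff)

lemma open_sigma: "a \<in> CA \<Longrightarrow> openin (tau A) (sigma A a)"
  unfolding open_tau SB_def by (rule generate_topology_on.Basis) blast
lemma open_csigma: "a \<in> CA \<Longrightarrow> openin (tau A) (XA - sigma A a)"
  unfolding open_tau SB_def by (rule generate_topology_on.Basis) blast

lemma open_diff: "a \<in> CA \<Longrightarrow> b' \<in> CA \<Longrightarrow> openin (tau A) (sigma A a - sigma A b')"
proof -
  assume "a \<in> CA" "b' \<in> CA"
  then have "openin (tau A) (sigma A a \<inter> (XA - sigma A b'))" using open_sigma open_csigma by blast
  moreover have "sigma A a \<inter> (XA - sigma A b') = sigma A a - sigma A b'" using sigma_sub by blast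
  ultimately show ?thesis by simp
qed

lemma closed_diff: "a \<in> CA \<Longrightarrow> b' \<in> CA \<Longrightarrow> closedin (tau A) (sigma A a - sigma A b')"
proof -
  assume ab: "a \<in> CA" "b' \<in> CA"
  then have "openin (tau A) ((XA - sigma A a) \<union> sigma A b')" using open_sigma open_csigma by blast
  moreover have "(XA - sigma A a) \<union> sigma A b' = XA - (sigma A a - sigma A b')" using sigma_sub by blast
  ultimately show ?thesis unfolding closedin_def using sigma_sub by auto
qed

lemma open_basic: "generate_topology_on SB W \<Longrightarrow> P \<in> W \<Longrightarrow>
   \<exists>a\<in>CA. \<exists>b'\<in>CA. P \<in> sigma A a - sigma A b' \<and> sigma A a - sigma A b' \<subseteq> W"
proof (induction arbitrary: P rule: generate_topology_on.induct)
  case Empty then show ?case by simp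
next
  case (Int U V)
  then obtain a1 b1 a2 b2 where ab: "a1 \<in> CA" "b1 \<in> CA" "a2 \<in> CA" "b2 \<in> CA"
    "P \<in> sigma A a1 - sigma A b1" "sigma A a1 - sigma A b1 \<subseteq> U"
    "P \<in> sigma A a2 - sigma A b2" "sigma A a2 - sigma A b2 \<subseteq> V" by blast
  have "sigma A (wmeet A a1 a2) - sigma A (wjoin A b1 b2) = (sigma A a1 - sigma A b1) \<inter> (sigma A a2 - sigma A b2)"
    using ab sigma_m sigma_j by auto
  then show ?case using ab by (intro bexI[of _ "wmeet A a1 a2"] bexI[of _ "wjoin A b1 b2"]) auto
next
  case (UN K)
  then show ?case by blast
next
  case (Basis s)
  then obtain c where c: "c \<in> CA" "s = sigma A c \<or> s = XA - sigma A c" unfolding SB_def by blast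
  show ?case
  proof (cases "s = sigma A c")
    case True
    then show ?thesis using Basis c sigma_b by (intro bexI[of _ c] bexI[of _ "wbot A"]) auto
  next
    case False
    then have "s = sigma A (wtop A) - sigma A c" using c sigma_t by simp
    then show ?thesis using Basis c by (intro bexI[of _ "wtop A"] bexI[of _ c]) auto
  qed
qed

lemma compact: "compact_space (tau A)"
proof (rule Alexander_subbase[where \<B> = SB])
  have eq: "(finite intersection_of (\<lambda>x. x \<in> SB) relative_to \<Union>SB) = (finite' intersection_of (\<lambda>x. x \<in> SB))"
  proof (intro ext iffI)
    fix S assume "(finite intersection_of (\<lambda>x. x \<in> SB) relative_to \<Union>SB) S"
    then obtain U where U: "finite U" "U \<subseteq> SB" "XA \<inter> \<Inter>U = S"
      unfolding relative_to_def intersection_of_def USB by auto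
    have XSB: "XA \<in> SB" using USB unfolding SB_def using sigma_t tC by (metis UnI1 image_eqI)
    show "(finite' intersection_of (\<lambda>x. x \<in> SB)) S" unfolding intersection_of_def
      by (rule exI[of _ "insert XA U"]) (use U XSB in auto)
  next
    fix S assume "(finite' intersection_of (\<lambda>x. x \<in> SB)) S"
    then obtain U where U: "finite U" "U \<noteq> {}" "U \<subseteq> SB" "\<Inter>U = S"
      unfolding intersection_of_def by auto
    have "S \<subseteq> XA" using U USB by blast
    then show "(finite intersection_of (\<lambda>x. x \<in> SB) relative_to \<Union>SB) S"
      unfolding relative_to_def intersection_of_def USB using U by blast
  qed
  show "topology (arbitrary union_of (finite intersection_of (\<lambda>x. x \<in> SB) relative_to \<Union>SB)) = tau A"
    unfolding eq tau_eq generate_topology_on_eq ..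
next
  fix C' assume C': "C' \<subseteq> SB" "\<Union>C' = topspace (tau A)"
  define A1 where "A1 = {a\<in>CA. sigma A a \<in> C'}"
  define B1 where "B1 = {b'\<in>CA. XA - sigma A b' \<in> C'}"
  define Fi where "Fi = {x\<in>CA. \<exists>bs. set bs \<subseteq> B1 \<and> le (bigM bs) x}"
  define Id where "Id = {x\<in>CA. \<exists>as. set as \<subseteq> A1 \<and> le x (bigJ as)}"
  have A1C: "A1 \<subseteq> CA" and B1C: "B1 \<subseteq> CA" unfolding A1_def B1_def by auto
  show "\<exists>C''. finite C'' \<and> C'' \<subseteq> C' \<and> \<Union>C'' = topspace (tau A)"
  proof (cases "\<exists>x\<in>Fi. \<exists>y\<in>Id. le x y")
    case True
    then obtain x y bs as where xy: "x \<in> CA" "y \<in> CA" "set bs \<subseteq> B1" "le (bigM bs) x" "set as \<subseteq> A1" "le y (bigJ as)" "le x y"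
      unfolding Fi_def Id_def by blast
    have bsC: "set bs \<subseteq> CA" and asC: "set as \<subseteq> CA" using xy A1C B1C by auto
    have le1: "le (bigM bs) (bigJ as)"
      using le_trans[of "bigM bs" x y] le_trans[of "bigM bs" y "bigJ as"] xy bsC asC by simp
    define C'' where "C'' = sigma A ` set as \<union> (\<lambda>b'. XA - sigma A b') ` set bs"
    have "finite C''" unfolding C''_def by simp
    moreover have "C'' \<subseteq> C'" unfolding C''_def using xy unfolding A1_def B1_def by auto
    moreover have "\<Union>C'' = XA"
    proof
      show "\<Union>C'' \<subseteq> XA" unfolding C''_def sigma_def by auto
    next
      show "XA \<subseteq> \<Union>C''"
      proof
        fix P assume P: "P \<in> XA"
        then have pP: "pf P" using XA by simp
        show "P \<in> \<Union>C''"
        proof (cases "set bs \<subseteq> P")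
          case True
          then have "bigM bs \<in> P" using bigM_pf[OF pP bsC] by simp
          then have "bigJ as \<in> P" using pf_up[OF pP _ _ le1] asC by simp
          then obtain a where "a \<in> set as" "a \<in> P" using bigJ_pf[OF pP asC] by blast
          then show ?thesis unfolding C''_def sigma_def using P by blast
        next
          case False
          then obtain b' where "b' \<in> set bs" "b' \<notin> P" by blast
          then show ?thesis unfolding C''_def sigma_def using P by blast
        qed
      qed
    qed
    ultimately show ?thesis by auto
  next
    case False
    have "filt Fi" unfolding filt_def
    proof (intro conjI ballI impI)
      show "Fi \<subseteq> CA" unfolding Fi_def by blast
      have "wtop A \<in> Fi" unfolding Fi_def by (auto intro!: exI[of _ "[]"])
      then show "Fi \<noteq> {}" by blast
    next
      fix x y assume "x \<in> Fi" "y \<in> Fi"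
      then obtain bs bs' where b: "x \<in> CA" "y \<in> CA" "set bs \<subseteq> B1" "le (bigM bs) x" "set bs' \<subseteq> B1" "le (bigM bs') y"
        unfolding Fi_def by blast
      have "set bs \<subseteq> CA" "set bs' \<subseteq> CA" using b B1C by auto
      then have "le (bigM (bs @ bs')) (wmeet A x y)" using bigM_app le_mono_m b by simp
      moreover have "set (bs @ bs') \<subseteq> B1" using b by simp
      moreover have "wmeet A x y \<in> CA" using b by simp
      ultimately show "wmeet A x y \<in> Fi" unfolding Fi_def using b by blast
    next
      fix x y assume "x \<in> Fi" "y \<in> CA" "le x y"
      then obtain bs where b: "x \<in> CA" "set bs \<subseteq> B1" "le (bigM bs) x" unfolding Fi_def by blast
      have "set bs \<subseteq> CA" using b B1C by auto
      then have "le (bigM bs) y" using le_trans[of "bigM bs" x y] b \<open>y \<in> CA\<close> \<open>le x y\<close> by simp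
      then show "y \<in> Fi" unfolding Fi_def using b \<open>y \<in> CA\<close> by blast
    qed
    moreover have "idl Id" unfolding idl_def
    proof (intro conjI ballI impI)
      show "Id \<subseteq> CA" unfolding Id_def by blast
      have "wbot A \<in> Id" unfolding Id_def by (auto intro!: exI[of _ "[]"])
      then show "Id \<noteq> {}" by blast
    next
      fix x y assume "x \<in> Id" "y \<in> Id"
      then obtain as as' where b: "x \<in> CA" "y \<in> CA" "set as \<subseteq> A1" "le x (bigJ as)" "set as' \<subseteq> A1" "le y (bigJ as')"
        unfolding Id_def by blast
      have "set as \<subseteq> CA" "set as' \<subseteq> CA" using b A1C by auto
      then have "le (wjoin A x y) (bigJ (as @ as'))" using bigJ_app le_mono_j b by simp
      moreover have "set (as @ as') \<subseteq> A1" using b by simp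
      moreover have "wjoin A x y \<in> CA" using b by simp
      ultimately show "wjoin A x y \<in> Id" unfolding Id_def using b by blast
    next
      fix x y assume "x \<in> Id" "y \<in> CA" "le y x"
      then obtain as where b: "x \<in> CA" "set as \<subseteq> A1" "le x (bigJ as)" unfolding Id_def by blast
      have "set as \<subseteq> CA" using b A1C by auto
      then have "le y (bigJ as)" using le_trans[of y x "bigJ as"] b \<open>y \<in> CA\<close> \<open>le y x\<close> by simp
      then show "y \<in> Id" unfolding Id_def using b \<open>y \<in> CA\<close> by blast
    qed
    ultimately obtain Q where Q: "pf Q" "Fi \<subseteq> Q" "Q \<inter> Id = {}"
      using pft_gen False by blast
    have "Q \<in> \<Union>C'" using C'(2) Q(1) XA by simp
    then obtain S where S: "S \<in> C'" "Q \<in> S" by blast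
    then obtain c where c: "c \<in> CA" "S = sigma A c \<or> S = XA - sigma A c" using C'(1) unfolding SB_def by blast
    show ?thesis
    proof (cases "S = sigma A c")
      case True
      then have "c \<in> A1" unfolding A1_def using c S by simp
      then have "c \<in> Id" unfolding Id_def using c by (auto intro!: exI[of _ "[c]"])
      moreover have "c \<in> Q" using True S unfolding sigma_eq by blast
      ultimately show ?thesis using Q by blast
    next
      case False
      then have Sc: "S = XA - sigma A c" using c by simp
      then have "c \<in> B1" unfolding B1_def using c S by simp
      then have "c \<in> Fi" unfolding Fi_def using c by (auto intro!: exI[of _ "[c]"])
      moreover have "c \<notin> Q" using Sc S unfolding sigma_eq by blast
      ultimately show ?thesis using Q by blast
    qed
  qed
qed

definition Dn :: "('a \<times> 'a) list \<Rightarrow> 'a set set" where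
  "Dn K = (\<Union>p\<in>set K. sigma A (fst p) - sigma A (snd p))"

lemma Dn_simps[simp]: "Dn [] = {}" "Dn (p # K) = (sigma A (fst p) - sigma A (snd p)) \<union> Dn K"
  unfolding Dn_def by auto

lemma Dn_app: "Dn (K @ K') = Dn K \<union> Dn K'" unfolding Dn_def by auto

lemma Dn_mem: "Q \<in> Dn K \<longleftrightarrow> Q \<in> XA \<and> (\<exists>p\<in>set K. fst p \<in> Q \<and> snd p \<notin> Q)"
  unfolding Dn_def sigma_def by auto

lemma Dn_sub: "Dn K \<subseteq> XA" using Dn_mem by blast

lemma clopen_Dn: assumes "set K \<subseteq> CA \<times> CA" shows "Dn K \<in> clopens A"
proof -
  have o: "openin (tau A) (Dn K)" unfolding Dn_def using assms open_diff by (auto intro!: openin_Union)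
  have "closedin (tau A) (\<Union>((\<lambda>p. sigma A (fst p) - sigma A (snd p)) ` set K))"
    using assms closed_diff by (intro closedin_Union) auto
  then show ?thesis using o unfolding clopens_def Dn_def by simp
qed

lemma clopens_Dn: assumes "U \<in> clopens A" shows "\<exists>K. set K \<subseteq> CA \<times> CA \<and> U = Dn K"
proof -
  have op: "openin (tau A) U" and cl: "closedin (tau A) U" using assms unfolding clopens_def by auto
  have cp: "compactin (tau A) U" using closedin_compact_space[OF compact cl] .
  define f where "f = (\<lambda>p. sigma A (fst p) - sigma A (snd p))"
  define Ks where "Ks = {p. p \<in> CA \<times> CA \<and> f p \<subseteq> U}"
  have "\<forall>V\<in>f ` Ks. openin (tau A) V" unfolding Ks_def f_def using open_diff by auto
  moreover have "U \<subseteq> \<Union>(f ` Ks)"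
  proof
    fix P assume "P \<in> U"
    then obtain a b' where "a \<in> CA" "b' \<in> CA" "P \<in> sigma A a - sigma A b'" "sigma A a - sigma A b' \<subseteq> U"
      using open_basic op open_tau by blast
    then show "P \<in> \<Union>(f ` Ks)" unfolding Ks_def f_def by (auto intro!: bexI[of _ "(a, b')"])
  qed
  ultimately obtain \<F> where F: "finite \<F>" "\<F> \<subseteq> f ` Ks" "U \<subseteq> \<Union>\<F>"
    using cp unfolding compactin_def by blast
  then obtain Kf where Kf: "Kf \<subseteq> Ks" "finite Kf" "\<F> = f ` Kf" using finite_subset_image[OF F(1,2)] by blast
  then obtain K where K: "set K = Kf" using finite_list by blast
  have "Dn K = \<Union>(f ` Kf)" unfolding Dn_def f_def K ..
  moreover have "\<Union>(f ` Kf) = U" using F Kf unfolding Ks_def by blast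
  moreover have "set K \<subseteq> CA \<times> CA" using K Kf unfolding Ks_def by blast
  ultimately show ?thesis by blast
qed

lemma clopens_sub: "U \<in> clopens A \<Longrightarrow> U \<subseteq> XA"
  unfolding clopens_def using openin_subset by fastforce

lemma clopen_compl: "U \<in> clopens A \<Longrightarrow> XA - U \<in> clopens A"
  unfolding clopens_def
  by (metis closedin_def openin_closedin_eq topspace_tau mem_Collect_eq)

lemma clopen_Int: "U \<in> clopens A \<Longrightarrow> V \<in> clopens A \<Longrightarrow> U \<inter> V \<in> clopens A"
  unfolding clopens_def by auto
lemma clopen_Un: "U \<in> clopens A \<Longrightarrow> V \<in> clopens A \<Longrightarrow> U \<union> V \<in> clopens A"
  unfolding clopens_def by auto
lemma clopen_empty: "{} \<in> clopens A"
  unfolding clopens_def by auto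
lemma clopen_X: "XA \<in> clopens A"
  unfolding clopens_def by (metis closedin_topspace openin_topspace topspace_tau mem_Collect_eq)

lemma clopen_sigma: "a \<in> CA \<Longrightarrow> sigma A a \<in> clopens A"
  using clopen_Dn[of "[(a, wbot A)]"] sigma_b by simp

lemma clopens_coDn: assumes "U \<in> clopens A" shows "\<exists>K. set K \<subseteq> CA \<times> CA \<and> U = XA - Dn K"
proof -
  obtain K where K: "set K \<subseteq> CA \<times> CA" "XA - U = Dn K" using clopens_Dn clopen_compl assms by blast
  have "U = XA - Dn K" using K clopens_sub[OF assms] by blast
  then show ?thesis using K by blast
qed

end



context WHB begin

lemma Rrel_X: "(P, Q) \<in> Rrel A \<Longrightarrow> P \<in> XA \<and> Q \<in> XA" unfolding Rrel_def by auto
lemma Srel_X: "(P, Q) \<in> Srel A \<Longrightarrow> P \<in> XA \<and> Q \<in> XA" unfolding Srel_def by auto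

lemma GA_Dn: assumes K: "set K \<subseteq> CA \<times> CA"
  shows "GA A (XA - Dn K) = {P \<in> XA. \<forall>p\<in>set K. imp (fst p) (snd p) \<in> P}"
proof (intro set_eqI iffI)
  fix P assume P: "P \<in> GA A (XA - Dn K)"
  then have PX: "P \<in> XA" and sub: "\<And>Q. (P, Q) \<in> Rrel A \<Longrightarrow> Q \<notin> Dn K" unfolding GA_def by auto
  have "imp (fst p) (snd p) \<in> P" if p: "p \<in> set K" for p
  proof -
    have pC: "fst p \<in> CA" "snd p \<in> CA" using p K by auto
    have "\<forall>Q. (P, Q) \<in> Rrel A \<longrightarrow> fst p \<in> Q \<longrightarrow> snd p \<in> Q"
      using sub p Dn_mem Rrel_X by blast
    then show ?thesis using KL1[OF PX pC] by blast
  qed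
  then show "P \<in> {P \<in> XA. \<forall>p\<in>set K. imp (fst p) (snd p) \<in> P}" using PX by blast
next
  fix P assume P: "P \<in> {P \<in> XA. \<forall>p\<in>set K. imp (fst p) (snd p) \<in> P}"
  then have PX: "P \<in> XA" by blast
  have "Q \<in> XA - Dn K" if Q: "(P, Q) \<in> Rrel A" for Q
  proof -
    have "\<not> (fst p \<in> Q \<and> snd p \<notin> Q)" if p: "p \<in> set K" for p
    proof -
      have pC: "fst p \<in> CA" "snd p \<in> CA" using p K by auto
      have "imp (fst p) (snd p) \<in> P" using P p by blast
      then show ?thesis using KL1[OF PX pC] Q by blast
    qed
    then show ?thesis using Rrel_X[OF Q] Dn_mem by blast
  qed
  then show "P \<in> GA A (XA - Dn K)" unfolding GA_def using PX by blast
qed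

lemma HA_Dn: assumes K: "set K \<subseteq> CA \<times> CA"
  shows "HA A (XA - Dn K) = {P \<in> XA. \<forall>p\<in>set K. cimp (fst p) (snd p) \<notin> P}"
proof (intro set_eqI iffI)
  fix P assume P: "P \<in> HA A (XA - Dn K)"
  then have PX: "P \<in> XA" and sub: "\<And>Q. (P, Q) \<in> Srel A \<Longrightarrow> Q \<notin> Dn K" unfolding HA_def by auto
  have "cimp (fst p) (snd p) \<notin> P" if p: "p \<in> set K" for p
  proof
    assume c: "cimp (fst p) (snd p) \<in> P"
    have pC: "fst p \<in> CA" "snd p \<in> CA" using p K by auto
    obtain Q where Q: "(P, Q) \<in> Srel A" "fst p \<in> Q" "snd p \<notin> Q" using KL2[OF PX pC] c by blast
    then have "Q \<in> Dn K" using Dn_mem Srel_X p by blast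
    then show False using sub Q by blast
  qed
  then show "P \<in> {P \<in> XA. \<forall>p\<in>set K. cimp (fst p) (snd p) \<notin> P}" using PX by blast
next
  fix P assume P: "P \<in> {P \<in> XA. \<forall>p\<in>set K. cimp (fst p) (snd p) \<notin> P}"
  then have PX: "P \<in> XA" by blast
  have "Q \<in> XA - Dn K" if Q: "(P, Q) \<in> Srel A" for Q
  proof -
    have "\<not> (fst p \<in> Q \<and> snd p \<notin> Q)" if p: "p \<in> set K" for p
    proof -
      have pC: "fst p \<in> CA" "snd p \<in> CA" using p K by auto
      have "cimp (fst p) (snd p) \<notin> P" using P p by blast
      then show ?thesis using KL2[OF PX pC] Q by blast
    qed
    then show ?thesis using Srel_X[OF Q] Dn_mem by blast
  qed
  then show "P \<in> HA A (XA - Dn K)" unfolding HA_def using PX by blast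
qed

lemma sigma_bigM: "set xs \<subseteq> CA \<Longrightarrow> sigma A (bigM xs) = {P \<in> XA. set xs \<subseteq> P}"
  unfolding sigma_eq using bigM_pf XA by auto
lemma sigma_bigJ: "set xs \<subseteq> CA \<Longrightarrow> sigma A (bigJ xs) = {P \<in> XA. \<exists>x\<in>set xs. x \<in> P}"
  unfolding sigma_eq using bigJ_pf XA by auto

lemma GA_Dn_sigma: assumes K: "set K \<subseteq> CA \<times> CA"
  shows "GA A (XA - Dn K) = sigma A (bigM (map (\<lambda>p. imp (fst p) (snd p)) K))"
proof -
  have "set (map (\<lambda>p. imp (fst p) (snd p)) K) \<subseteq> CA" using K by auto
  then have "sigma A (bigM (map (\<lambda>p. imp (fst p) (snd p)) K)) = {P \<in> XA. set (map (\<lambda>p. imp (fst p) (snd p)) K) \<subseteq> P}"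
    by (rule sigma_bigM)
  then show ?thesis unfolding GA_Dn[OF K] by auto
qed

lemma HA_Dn_sigma: assumes K: "set K \<subseteq> CA \<times> CA"
  shows "HA A (XA - Dn K) = XA - sigma A (bigJ (map (\<lambda>p. cimp (fst p) (snd p)) K))"
proof -
  have "set (map (\<lambda>p. cimp (fst p) (snd p)) K) \<subseteq> CA" using K by auto
  then have "sigma A (bigJ (map (\<lambda>p. cimp (fst p) (snd p)) K)) = {P \<in> XA. \<exists>x\<in>set (map (\<lambda>p. cimp (fst p) (snd p)) K). x \<in> P}"
    by (rule sigma_bigJ)
  then show ?thesis unfolding HA_Dn[OF K] by auto
qed

lemma GA_clopen: assumes "U \<in> clopens A" shows "GA A U \<in> clopens A"
proof -
  obtain K where K: "set K \<subseteq> CA \<times> CA" "U = XA - Dn K" using clopens_coDn assms by blast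
  have "set (map (\<lambda>p. imp (fst p) (snd p)) K) \<subseteq> CA" using K by auto
  then show ?thesis unfolding K(2) GA_Dn_sigma[OF K(1)] by (intro clopen_sigma) simp
qed

lemma HA_clopen: assumes "U \<in> clopens A" shows "HA A U \<in> clopens A"
proof -
  obtain K where K: "set K \<subseteq> CA \<times> CA" "U = XA - Dn K" using clopens_coDn assms by blast
  have "set (map (\<lambda>p. cimp (fst p) (snd p)) K) \<subseteq> CA" using K by auto
  then show ?thesis unfolding K(2) HA_Dn_sigma[OF K(1)] by (intro clopen_compl clopen_sigma) simp
qed

lemma PA_eq: "XA - HA A (XA - x) = {P \<in> XA. \<exists>Q. (P, Q) \<in> Srel A \<and> Q \<in> x}"
  unfolding HA_def using Srel_X by blast
lemma FA_eq: "XA - GA A (XA - x) = {P \<in> XA. \<exists>Q. (P, Q) \<in> Rrel A \<and> Q \<in> x}"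
  unfolding GA_def using Rrel_X by blast

lemma T_bdl: "bdl (clopens A) (\<inter>) (\<union>) {} XA"
  unfolding bdl_def
proof (intro conjI ballI)
  show "{} \<in> clopens A" "XA \<in> clopens A" using clopen_empty clopen_X by blast+
  fix x assume x: "x \<in> clopens A"
  show "{} \<union> x = x" by blast
  show "XA \<inter> x = x" using clopens_sub[OF x] by blast
  fix y assume y: "y \<in> clopens A"
  show "x \<inter> y \<in> clopens A" "x \<union> y \<in> clopens A" using x y clopen_Int clopen_Un by blast+
  show "x \<inter> y = y \<inter> x" "x \<union> y = y \<union> x" "x \<inter> (x \<union> y) = x" "x \<union> x \<inter> y = x" by blast+
  fix z assume z: "z \<in> clopens A"
  show "x \<inter> (y \<inter> z) = x \<inter> y \<inter> z" "x \<union> (y \<union> z) = x \<union> y \<union> z" "x \<inter> (y \<union> z) = x \<inter> y \<union> x \<inter> z" by blast+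
qed

lemma T_ba: "boolean_algebra_on (Tfun A)"
proof -
  have "\<forall>x\<in>clopens A. XA - x \<in> clopens A \<and> x \<inter> (XA - x) = {} \<and> x \<union> (XA - x) = XA"
    using clopen_compl clopens_sub by blast
  then show ?thesis unfolding boolean_algebra_on_def using T_bdl unfolding Tfun_def by simp
qed

lemma T_tense: "tense_algebra (Tfun A)"
  unfolding tense_algebra_def
proof (intro conjI T_ba ballI)
  fix x assume x: "x \<in> tcar (Tfun A)"
  then show "tG (Tfun A) x \<in> tcar (Tfun A)" "tH (Tfun A) x \<in> tcar (Tfun A)"
    unfolding Tfun_def using GA_clopen HA_clopen by simp_all
next
  fix x y assume x: "x \<in> tcar (Tfun A)" and y: "y \<in> tcar (Tfun A)"
  have xX: "x \<subseteq> XA" using x clopens_sub unfolding Tfun_def by simp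
  have P: "tP (Tfun A) x = {P \<in> XA. \<exists>Q. (P, Q) \<in> Srel A \<and> Q \<in> x}"
    unfolding tP_def Tfun_def using PA_eq by simp
  have F: "tF (Tfun A) x = {P \<in> XA. \<exists>Q. (P, Q) \<in> Rrel A \<and> Q \<in> x}"
    unfolding tF_def Tfun_def using FA_eq by simp
  have G: "tG (Tfun A) y = {P \<in> XA. \<forall>Q. (P, Q) \<in> Rrel A \<longrightarrow> Q \<in> y}"
    unfolding Tfun_def GA_def by auto
  have H: "tH (Tfun A) y = {P \<in> XA. \<forall>Q. (P, Q) \<in> Srel A \<longrightarrow> Q \<in> y}"
    unfolding Tfun_def HA_def by auto
  have tle: "\<And>u v. tle (Tfun A) u v \<longleftrightarrow> u \<subseteq> v" unfolding tle_def Tfun_def by auto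
  have SR': "\<And>P Q. (P, Q) \<in> Srel A \<longleftrightarrow> (Q, P) \<in> Rrel A"
    using SR Srel_X Rrel_X by blast
  show "tle (Tfun A) (tP (Tfun A) x) y = tle (Tfun A) x (tG (Tfun A) y)"
    unfolding tle P G using xX SR' Rrel_X by blast
  show "tle (Tfun A) (tF (Tfun A) x) y = tle (Tfun A) x (tH (Tfun A) y)"
    unfolding tle F H using xX SR' Srel_X by blast
qed

lemma sigma_hom: "whb_hom A (Mfun (Tfun A)) (sigma A)"
  unfolding whb_hom_def
proof (intro conjI ballI)
  fix a assume "a \<in> CA" then show "sigma A a \<in> wcar (Mfun (Tfun A))"
    unfolding Mfun_def Tfun_def using clopen_sigma by simp
next
  fix a b' assume ab: "a \<in> CA" "b' \<in> CA"
  show "sigma A (wmeet A a b') = wmeet (Mfun (Tfun A)) (sigma A a) (sigma A b')"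
    unfolding Mfun_def Tfun_def using sigma_m ab by simp
  show "sigma A (wjoin A a b') = wjoin (Mfun (Tfun A)) (sigma A a) (sigma A b')"
    unfolding Mfun_def Tfun_def using sigma_j ab by simp
  have K: "set [(a, b')] \<subseteq> CA \<times> CA" using ab by simp
  have D1: "Dn [(a, b')] = sigma A a - sigma A b'" by simp
  have "(XA - sigma A a) \<union> sigma A b' = XA - Dn [(a, b')]" using sigma_sub by auto
  then show "sigma A (imp a b') = wimp (Mfun (Tfun A)) (sigma A a) (sigma A b')"
    unfolding Mfun_def Tfun_def using GA_Dn_sigma[OF K] ab by simp
  have "sigma A a \<inter> (XA - sigma A b') = Dn [(a, b')]" using sigma_sub by auto
  moreover have "XA - (XA - sigma A (cimp a b')) = sigma A (cimp a b')" using sigma_sub by auto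
  ultimately show "sigma A (cimp a b') = wcoimp (Mfun (Tfun A)) (sigma A a) (sigma A b')"
    unfolding Mfun_def Tfun_def tP_def using HA_Dn_sigma[OF K] ab by simp
next
  show "sigma A (wbot A) = wbot (Mfun (Tfun A))" unfolding Mfun_def Tfun_def using sigma_b by simp
  show "sigma A (wtop A) = wtop (Mfun (Tfun A))" unfolding Mfun_def Tfun_def using sigma_t by simp
qed

end



locale WHB2 = A1: WHB A + A2: WHB A'
  for A :: "('a, 'z) whb_scheme" and A' :: "('c, 'y) whb_scheme" +
  fixes h :: "'a \<Rightarrow> 'c"
  assumes H: "whb_hom A A' h"
begin

lemma hC[simp]: "a \<in> wcar A \<Longrightarrow> h a \<in> wcar A'"
  using H unfolding whb_hom_def by blast
lemma hops:
  assumes "a \<in> wcar A" "b \<in> wcar A"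
  shows "h (wmeet A a b) = wmeet A' (h a) (h b)" "h (wjoin A a b) = wjoin A' (h a) (h b)"
    "h (wimp A a b) = wimp A' (h a) (h b)" "h (wcoimp A a b) = wcoimp A' (h a) (h b)"
  using H assms unfolding whb_hom_def by blast+
lemma hb[simp]: "h (wbot A) = wbot A'" and ht[simp]: "h (wtop A) = wtop A'"
  using H unfolding whb_hom_def by blast+

definition pre :: "'c set \<Rightarrow> 'a set" where "pre Q = {a \<in> wcar A. h a \<in> Q}"

lemma pre_X: assumes "Q \<in> Xsp A'" shows "pre Q \<in> Xsp A"
proof -
  have pQ: "A2.pf Q" using assms A2.XA by simp
  have "A1.pf (pre Q)" unfolding A1.pf_def pre_def
  proof (intro conjI ballI impI)
    show "{a \<in> wcar A. h a \<in> Q} \<subseteq> wcar A" by blast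
    show "wtop A \<in> {a \<in> wcar A. h a \<in> Q}" using pQ by simp
    show "wbot A \<notin> {a \<in> wcar A. h a \<in> Q}" using pQ by simp
  next
    fix x y assume "x \<in> {a \<in> wcar A. h a \<in> Q}" "y \<in> {a \<in> wcar A. h a \<in> Q}"
    then show "wmeet A x y \<in> {a \<in> wcar A. h a \<in> Q}" using pQ hops by simp
  next
    fix x y assume xy: "x \<in> {a \<in> wcar A. h a \<in> Q}" "y \<in> wcar A" "wmeet A x y = x"
    then have "A2.le (h x) (h y)" unfolding A2.le_def using hops[of x y] by simp
    then have "h y \<in> Q" using A2.pf_up[OF pQ, of "h x" "h y"] xy by simp
    then show "y \<in> {a \<in> wcar A. h a \<in> Q}" using xy by simp
  next
    fix x y assume "x \<in> wcar A" "y \<in> wcar A" "wjoin A x y \<in> {a \<in> wcar A. h a \<in> Q}"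
    then show "x \<in> {a \<in> wcar A. h a \<in> Q} \<or> y \<in> {a \<in> wcar A. h a \<in> Q}" using pQ hops by simp
  qed
  then show ?thesis using A1.XA by simp
qed

lemma Tmor_eq: "Tmor A A' h U = {Q \<in> Xsp A'. pre Q \<in> U}"
  unfolding Tmor_def pre_def ..

lemma pre_mem: "a \<in> wcar A \<Longrightarrow> a \<in> pre Q \<longleftrightarrow> h a \<in> Q"
  unfolding pre_def by simp

lemma Tmor_mem: "Q \<in> Tmor A A' h U \<longleftrightarrow> Q \<in> Xsp A' \<and> pre Q \<in> U"
  unfolding Tmor_eq by simp

lemma Tmor_sigma: "a \<in> wcar A \<Longrightarrow> Tmor A A' h (sigma A a) = sigma A' (h a)"
  unfolding Tmor_eq sigma_def pre_def using pre_X unfolding pre_def by auto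

lemma Tmor_Dn: assumes "set K \<subseteq> wcar A \<times> wcar A"
  shows "Tmor A A' h (A1.Dn K) = A2.Dn (map (\<lambda>p. (h (fst p), h (snd p))) K)"
proof (rule set_eqI)
  fix Q
  have "Q \<in> Tmor A A' h (A1.Dn K) \<longleftrightarrow> Q \<in> Xsp A' \<and> (\<exists>p\<in>set K. fst p \<in> pre Q \<and> snd p \<notin> pre Q)"
    unfolding Tmor_mem A1.Dn_mem using pre_X by blast
  also have "\<dots> \<longleftrightarrow> Q \<in> Xsp A' \<and> (\<exists>p\<in>set K. h (fst p) \<in> Q \<and> h (snd p) \<notin> Q)"
  proof -
    have e: "(fst p \<in> pre Q \<and> snd p \<notin> pre Q) \<longleftrightarrow> (h (fst p) \<in> Q \<and> h (snd p) \<notin> Q)" if "p \<in> set K" for p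
      using assms that pre_mem[of "fst p" Q] pre_mem[of "snd p" Q] by auto
    show ?thesis using e by blast
  qed
  also have "\<dots> \<longleftrightarrow> Q \<in> A2.Dn (map (\<lambda>p. (h (fst p), h (snd p))) K)"
    unfolding A2.Dn_mem by auto
  finally show "Q \<in> Tmor A A' h (A1.Dn K) \<longleftrightarrow> Q \<in> A2.Dn (map (\<lambda>p. (h (fst p), h (snd p))) K)" .
qed

lemma Tmor_compl: "Tmor A A' h (Xsp A - U) = Xsp A' - Tmor A A' h U"
  unfolding Tmor_eq using pre_X by auto
lemma Tmor_Int: "Tmor A A' h (U \<inter> V) = Tmor A A' h U \<inter> Tmor A A' h V"
  unfolding Tmor_eq by auto
lemma Tmor_Un: "Tmor A A' h (U \<union> V) = Tmor A A' h U \<union> Tmor A A' h V"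
  unfolding Tmor_eq by auto
lemma Tmor_empty: "Tmor A A' h {} = {}"
  unfolding Tmor_eq by auto
lemma Tmor_X: "Tmor A A' h (Xsp A) = Xsp A'"
  unfolding Tmor_eq using pre_X by auto

lemma Tmor_clopen: assumes "U \<in> clopens A" shows "Tmor A A' h U \<in> clopens A'"
proof -
  obtain K where K: "set K \<subseteq> wcar A \<times> wcar A" "U = A1.Dn K" using A1.clopens_Dn assms by blast
  have "set (map (\<lambda>p. (h (fst p), h (snd p))) K) \<subseteq> wcar A' \<times> wcar A'" using K by auto
  then show ?thesis unfolding K(2) Tmor_Dn[OF K(1)] by (rule A2.clopen_Dn)
qed

lemma Tmor_GA: assumes "U \<in> clopens A" shows "Tmor A A' h (GA A U) = GA A' (Tmor A A' h U)"
proof -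
  obtain K where K: "set K \<subseteq> wcar A \<times> wcar A" "U = Xsp A - A1.Dn K" using A1.clopens_coDn assms by blast
  let ?K' = "map (\<lambda>p. (h (fst p), h (snd p))) K"
  have K': "set ?K' \<subseteq> wcar A' \<times> wcar A'" using K by auto
  have TU: "Tmor A A' h U = Xsp A' - A2.Dn ?K'" unfolding K(2) Tmor_compl Tmor_Dn[OF K(1)] ..
  show ?thesis unfolding TU A2.GA_Dn[OF K'] unfolding K(2) A1.GA_Dn[OF K(1)]
  proof (rule set_eqI)
    fix Q
    have "Q \<in> Tmor A A' h {P \<in> Xsp A. \<forall>p\<in>set K. A1.imp (fst p) (snd p) \<in> P}
      \<longleftrightarrow> Q \<in> Xsp A' \<and> (\<forall>p\<in>set K. A1.imp (fst p) (snd p) \<in> pre Q)"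
      unfolding Tmor_mem using pre_X by blast
    also have "\<dots> \<longleftrightarrow> Q \<in> Xsp A' \<and> (\<forall>p\<in>set K. A2.imp (h (fst p)) (h (snd p)) \<in> Q)"
    proof -
      have e: "A1.imp (fst p) (snd p) \<in> pre Q \<longleftrightarrow> A2.imp (h (fst p)) (h (snd p)) \<in> Q" if "p \<in> set K" for p
      proof -
        have C: "fst p \<in> wcar A" "snd p \<in> wcar A" using K(1) that by auto
        then show ?thesis using pre_mem[of "A1.imp (fst p) (snd p)" Q] hops(3)[OF C] by simp
      qed
      show ?thesis using e by blast
    qed
    finally show "Q \<in> Tmor A A' h {P \<in> Xsp A. \<forall>p\<in>set K. A1.imp (fst p) (snd p) \<in> P} \<longleftrightarrow>
      Q \<in> {P \<in> Xsp A'. \<forall>p\<in>set ?K'. A2.imp (fst p) (snd p) \<in> P}" by simp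
  qed
qed

lemma Tmor_HA: assumes "U \<in> clopens A" shows "Tmor A A' h (HA A U) = HA A' (Tmor A A' h U)"
proof -
  obtain K where K: "set K \<subseteq> wcar A \<times> wcar A" "U = Xsp A - A1.Dn K" using A1.clopens_coDn assms by blast
  let ?K' = "map (\<lambda>p. (h (fst p), h (snd p))) K"
  have K': "set ?K' \<subseteq> wcar A' \<times> wcar A'" using K by auto
  have TU: "Tmor A A' h U = Xsp A' - A2.Dn ?K'" unfolding K(2) Tmor_compl Tmor_Dn[OF K(1)] ..
  show ?thesis unfolding TU A2.HA_Dn[OF K'] unfolding K(2) A1.HA_Dn[OF K(1)]
  proof (rule set_eqI)
    fix Q
    have "Q \<in> Tmor A A' h {P \<in> Xsp A. \<forall>p\<in>set K. A1.cimp (fst p) (snd p) \<notin> P}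
      \<longleftrightarrow> Q \<in> Xsp A' \<and> (\<forall>p\<in>set K. A1.cimp (fst p) (snd p) \<notin> pre Q)"
      unfolding Tmor_mem using pre_X by blast
    also have "\<dots> \<longleftrightarrow> Q \<in> Xsp A' \<and> (\<forall>p\<in>set K. A2.cimp (h (fst p)) (h (snd p)) \<notin> Q)"
    proof -
      have e: "A1.cimp (fst p) (snd p) \<in> pre Q \<longleftrightarrow> A2.cimp (h (fst p)) (h (snd p)) \<in> Q" if "p \<in> set K" for p
      proof -
        have C: "fst p \<in> wcar A" "snd p \<in> wcar A" using K(1) that by auto
        then show ?thesis using pre_mem[of "A1.cimp (fst p) (snd p)" Q] hops(4)[OF C] by simp
      qed
      show ?thesis using e by blast
    qed
    finally show "Q \<in> Tmor A A' h {P \<in> Xsp A. \<forall>p\<in>set K. A1.cimp (fst p) (snd p) \<notin> P} \<longleftrightarrow>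
      Q \<in> {P \<in> Xsp A'. \<forall>p\<in>set ?K'. A2.cimp (fst p) (snd p) \<notin> P}" by simp
  qed
qed

lemma Tmor_hom: "tba_hom (Tfun A) (Tfun A') (Tmor A A' h)"
  unfolding tba_hom_def
proof (intro conjI ballI)
  fix x assume x: "x \<in> tcar (Tfun A)"
  then have xc: "x \<in> clopens A" unfolding Tfun_def by simp
  show "Tmor A A' h x \<in> tcar (Tfun A')" using Tmor_clopen xc unfolding Tfun_def by simp
  show "Tmor A A' h (tneg (Tfun A) x) = tneg (Tfun A') (Tmor A A' h x)"
    unfolding Tfun_def using Tmor_compl by simp
  show "Tmor A A' h (tG (Tfun A) x) = tG (Tfun A') (Tmor A A' h x)"
    unfolding Tfun_def using Tmor_GA xc by simp
  show "Tmor A A' h (tH (Tfun A) x) = tH (Tfun A') (Tmor A A' h x)"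
    unfolding Tfun_def using Tmor_HA xc by simp
next
  fix x y
  show "Tmor A A' h (tmeet (Tfun A) x y) = tmeet (Tfun A') (Tmor A A' h x) (Tmor A A' h y)"
    unfolding Tfun_def using Tmor_Int by simp
  show "Tmor A A' h (tjoin (Tfun A) x y) = tjoin (Tfun A') (Tmor A A' h x) (Tmor A A' h y)"
    unfolding Tfun_def using Tmor_Un by simp
next
  show "Tmor A A' h (tbot (Tfun A)) = tbot (Tfun A')" unfolding Tfun_def using Tmor_empty by simp
  show "Tmor A A' h (ttop (Tfun A)) = ttop (Tfun A')" unfolding Tfun_def using Tmor_X by simp
qed

lemma h_le: "a \<in> wcar A \<Longrightarrow> b \<in> wcar A \<Longrightarrow> A1.le a b \<Longrightarrow> A2.le (h a) (h b)"
  unfolding A1.le_def A2.le_def using hops by metis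

lemma extend: assumes inj: "inj_on h (wcar A)" and P: "P \<in> Xsp A"
  shows "\<exists>Q\<in>Xsp A'. pre Q = P"
proof -
  have pP: "A1.pf P" using P A1.XA by simp
  have PC: "P \<subseteq> wcar A" using A1.pfD(1)[OF pP] .
  define F where "F = {y \<in> wcar A'. \<exists>p\<in>P. A2.le (h p) y}"
  define I where "I = {y \<in> wcar A'. \<exists>c\<in>wcar A - P. A2.le y (h c)}"
  have "A2.filt F" unfolding A2.filt_def
  proof (intro conjI ballI impI)
    show "F \<subseteq> wcar A'" unfolding F_def by blast
    have "wtop A \<in> P" using pP by simp
    moreover have "A2.le (h (wtop A)) (h (wtop A))" "h (wtop A) \<in> wcar A'" by simp_all
    ultimately have "h (wtop A) \<in> F" unfolding F_def by blast
    then show "F \<noteq> {}" by blast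
  next
    fix x y assume "x \<in> F" "y \<in> F"
    then obtain p q where pq: "x \<in> wcar A'" "y \<in> wcar A'" "p \<in> P" "q \<in> P" "A2.le (h p) x" "A2.le (h q) y"
      unfolding F_def by blast
    have pqC: "p \<in> wcar A" "q \<in> wcar A" using pq PC by auto
    have "A2.le (h (wmeet A p q)) (wmeet A' x y)"
      using hops(1)[OF pqC] A2.le_mono_m pq pqC by simp
    moreover have "wmeet A p q \<in> P" using pq pqC pP by simp
    moreover have "wmeet A' x y \<in> wcar A'" using pq by simp
    ultimately show "wmeet A' x y \<in> F" unfolding F_def by blast
  next
    fix x y assume "x \<in> F" "y \<in> wcar A'" "A2.le x y"
    then obtain p where p: "x \<in> wcar A'" "p \<in> P" "A2.le (h p) x" unfolding F_def by blast
    have "p \<in> wcar A" using p PC by auto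
    then have "A2.le (h p) y" using A2.le_trans[of "h p" x y] p \<open>y \<in> wcar A'\<close> \<open>A2.le x y\<close> by simp
    then show "y \<in> F" unfolding F_def using p \<open>y \<in> wcar A'\<close> by blast
  qed
  moreover have "A2.idl I" unfolding A2.idl_def
  proof (intro conjI ballI impI)
    show "I \<subseteq> wcar A'" unfolding I_def by blast
    have "wbot A \<in> wcar A - P" using pP by simp
    moreover have "A2.le (h (wbot A)) (h (wbot A))" "h (wbot A) \<in> wcar A'" by simp_all
    ultimately have "h (wbot A) \<in> I" unfolding I_def by blast
    then show "I \<noteq> {}" by blast
  next
    fix x y assume "x \<in> I" "y \<in> I"
    then obtain p q where pq: "x \<in> wcar A'" "y \<in> wcar A'" "p \<in> wcar A - P" "q \<in> wcar A - P" "A2.le x (h p)" "A2.le y (h q)"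
      unfolding I_def by blast
    have pqC: "p \<in> wcar A" "q \<in> wcar A" using pq by auto
    have "A2.le (wjoin A' x y) (h (wjoin A p q))"
      using hops(2)[OF pqC] A2.le_mono_j pq pqC by simp
    moreover have "wjoin A p q \<in> wcar A - P" using pq pqC pP by simp
    moreover have "wjoin A' x y \<in> wcar A'" using pq by simp
    ultimately show "wjoin A' x y \<in> I" unfolding I_def by blast
  next
    fix x y assume "x \<in> I" "y \<in> wcar A'" "A2.le y x"
    then obtain p where p: "x \<in> wcar A'" "p \<in> wcar A - P" "A2.le x (h p)" unfolding I_def by blast
    have "p \<in> wcar A" using p by auto
    then have "A2.le y (h p)" using A2.le_trans[of y x "h p"] p \<open>y \<in> wcar A'\<close> \<open>A2.le y x\<close> by simp
    then show "y \<in> I" unfolding I_def using p \<open>y \<in> wcar A'\<close> by blast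
  qed
  moreover have "\<not> A2.le x y" if xyFI: "x \<in> F" "y \<in> I" for x y
  proof
    assume xy: "A2.le x y"
    obtain p c where pc: "x \<in> wcar A'" "y \<in> wcar A'" "p \<in> P" "c \<in> wcar A - P" "A2.le (h p) x" "A2.le y (h c)"
      using xyFI unfolding F_def I_def by blast
    have pC: "p \<in> wcar A" "c \<in> wcar A" using pc PC by auto
    have "A2.le (h p) (h c)" using A2.le_trans[of "h p" x y] A2.le_trans[of "h p" y "h c"] pc pC xy by simp
    then have "h (wmeet A p c) = h p" using hops(1)[OF pC] unfolding A2.le_def by simp
    then have "wmeet A p c = p" using inj pC unfolding inj_on_def by simp
    then have "c \<in> P" using A1.pf_up[OF pP, of p c] pC pc unfolding A1.le_def by simp
    then show False using pc by blast
  qed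
  ultimately obtain Q where Q: "A2.pf Q" "F \<subseteq> Q" "Q \<inter> I = {}" using A2.pft_gen by blast
  have "pre Q = P"
  proof
    show "P \<subseteq> pre Q"
    proof
      fix p assume "p \<in> P"
      moreover then have "p \<in> wcar A" using PC by blast
      moreover then have "h p \<in> F" unfolding F_def using \<open>p \<in> P\<close> by (auto intro!: bexI[of _ p])
      ultimately show "p \<in> pre Q" unfolding pre_def using Q by blast
    qed
    show "pre Q \<subseteq> P"
    proof
      fix c assume c: "c \<in> pre Q"
      show "c \<in> P"
      proof (rule ccontr)
        assume "c \<notin> P"
        then have "h c \<in> I" unfolding I_def using c unfolding pre_def by (auto intro!: bexI[of _ c])
        then show False using Q c unfolding pre_def by blast
      qed
    qed
  qed
  then show ?thesis using Q A2.XA by blast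
qed

lemma Tmor_inj: assumes inj: "inj_on h (wcar A)" shows "inj_on (Tmor A A' h) (tcar (Tfun A))"
proof (rule inj_onI)
  fix U V assume U: "U \<in> tcar (Tfun A)" and V: "V \<in> tcar (Tfun A)" and eq: "Tmor A A' h U = Tmor A A' h V"
  have UX: "U \<subseteq> Xsp A" and VX: "V \<subseteq> Xsp A" using U V A1.clopens_sub unfolding Tfun_def by auto
  have "P \<in> V" if p: "P \<in> U" for P
  proof -
    obtain Q where "Q \<in> Xsp A'" "pre Q = P" using extend[OF inj] UX p by blast
    then show ?thesis using eq p unfolding Tmor_eq by blast
  qed
  moreover have "P \<in> U" if p: "P \<in> V" for P
  proof -
    obtain Q where "Q \<in> Xsp A'" "pre Q = P" using extend[OF inj] VX p by blast
    then show ?thesis using eq p unfolding Tmor_eq by blast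
  qed
  ultimately show "U = V" by blast
qed

end

lemma faithful:
  assumes "whb_algebra A" "whb_algebra A'" "whb_hom A A' h1" "whb_hom A A' h2"
    and eq: "\<forall>U\<in>tcar (Tfun A). Tmor A A' h1 U = Tmor A A' h2 U"
  shows "\<forall>a\<in>wcar A. h1 a = h2 a"
proof
  fix a assume a: "a \<in> wcar A"
  interpret I1: WHB2 A A' h1 unfolding WHB2_def WHB2_axioms_def WHB_def using assms by simp
  interpret I2: WHB2 A A' h2 unfolding WHB2_def WHB2_axioms_def WHB_def using assms by simp
  have "sigma A a \<in> tcar (Tfun A)" using I1.A1.clopen_sigma a unfolding Tfun_def by simp
  then have "sigma A' (h1 a) = sigma A' (h2 a)" using eq I1.Tmor_sigma I2.Tmor_sigma a by metis
  then show "h1 a = h2 a" using I1.A2.sigma_inj a by simp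
qed



locale TBA =
  fixes B :: "('b, 'z) tba_scheme"
  assumes T: "tense_algebra B"
begin

sublocale DLat "tcar B" "tmeet B" "tjoin B" "tbot B" "ttop B"
  using T unfolding tense_algebra_def boolean_algebra_on_def DLat_def by blast

abbreviation "CB \<equiv> tcar B"
abbreviation "n \<equiv> tneg B"
abbreviation "mm \<equiv> tmeet B"
abbreviation "jj \<equiv> tjoin B"
abbreviation "bb \<equiv> tbot B"
abbreviation "tt \<equiv> ttop B"

lemma tle_le: "tle B x y = le x y" unfolding tle_def le_def ..

lemma nC[simp]: "x \<in> CB \<Longrightarrow> n x \<in> CB"
  and compl_m[simp]: "x \<in> CB \<Longrightarrow> mm x (n x) = bb"
  and compl_j[simp]: "x \<in> CB \<Longrightarrow> jj x (n x) = tt"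
  using T unfolding tense_algebra_def boolean_algebra_on_def by blast+

lemma compl_m2[simp]: "x \<in> CB \<Longrightarrow> mm (n x) x = bb" using mcomm[of "n x" x] by simp
lemma compl_j2[simp]: "x \<in> CB \<Longrightarrow> jj (n x) x = tt" using jcomm[of "n x" x] by simp

lemma GC[simp]: "x \<in> CB \<Longrightarrow> tG B x \<in> CB" and HC[simp]: "x \<in> CB \<Longrightarrow> tH B x \<in> CB"
  using T unfolding tense_algebra_def by blast+
lemma PC[simp]: "x \<in> CB \<Longrightarrow> tP B x \<in> CB" unfolding tP_def by simp
lemma FC[simp]: "x \<in> CB \<Longrightarrow> tF B x \<in> CB" unfolding tF_def by simp

lemma adjG: "x \<in> CB \<Longrightarrow> y \<in> CB \<Longrightarrow> le (tP B x) y \<longleftrightarrow> le x (tG B y)"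
  using T unfolding tense_algebra_def tle_le by blast
lemma adjH: "x \<in> CB \<Longrightarrow> y \<in> CB \<Longrightarrow> le (tF B x) y \<longleftrightarrow> le x (tH B y)"
  using T unfolding tense_algebra_def tle_le by blast

lemma compl_unique: assumes "x \<in> CB" "y \<in> CB" "mm x y = bb" "jj x y = tt" shows "y = n x"
proof -
  have "y = mm y (jj x (n x))" using assms by simp
  also have "\<dots> = jj (mm y x) (mm y (n x))" using assms mdist[of y x "n x"] by simp
  also have "mm y x = bb" using assms mcomm by simp
  finally have 1: "y = mm y (n x)" using assms by simp
  have "n x = mm (n x) (jj x y)" using assms by simp
  also have "\<dots> = jj (mm (n x) x) (mm (n x) y)" using assms mdist[of "n x" x y] by simp
  finally have 2: "n x = mm (n x) y" using assms by simp
  show ?thesis using 1 2 mcomm[of y "n x"] assms by simp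
qed

lemma nn[simp]: "x \<in> CB \<Longrightarrow> n (n x) = x"
  using compl_unique[of "n x" x] by simp

lemma n_t[simp]: "n tt = bb" using compl_unique[of tt bb] by simp
lemma n_b[simp]: "n bb = tt" using compl_unique[of bb tt] by simp

lemma dm_j: assumes "x \<in> CB" "y \<in> CB" shows "n (jj x y) = mm (n x) (n y)"
proof -
  have "mm (jj x y) (mm (n x) (n y)) = jj (mm x (mm (n x) (n y))) (mm y (mm (n x) (n y)))"
    using assms mdist2 by simp
  also have "mm x (mm (n x) (n y)) = bb" using assms massoc[of x "n x" "n y"] by simp
  also have "mm y (mm (n x) (n y)) = bb" using assms mlc[of y "n x" "n y"] by simp
  finally have 1: "mm (jj x y) (mm (n x) (n y)) = bb" using assms by simp
  have "jj (jj x y) (mm (n x) (n y)) = mm (jj (jj x y) (n x)) (jj (jj x y) (n y))"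
    using assms jdist by simp
  also have "jj (jj x y) (n x) = tt" using assms jassoc[of x y "n x"] jcomm[of y "n x"] jassoc[of x "n x" y] by simp
  also have "jj (jj x y) (n y) = tt" using assms jassoc[of x y "n y"] by simp
  finally have 2: "jj (jj x y) (mm (n x) (n y)) = tt" using assms by simp
  show ?thesis using compl_unique[OF _ _ 1 2] assms by simp
qed

lemma dm_m: assumes "x \<in> CB" "y \<in> CB" shows "n (mm x y) = jj (n x) (n y)"
proof -
  have "n (jj (n x) (n y)) = mm x y" using dm_j[of "n x" "n y"] assms by simp
  then show ?thesis using nn[of "jj (n x) (n y)"] assms by (metis jC nC)
qed

lemma le_compl: assumes "x \<in> CB" "y \<in> CB" shows "le x y \<longleftrightarrow> mm x (n y) = bb"
proof
  assume "le x y"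
  then have "x = mm x y" unfolding le_def by simp
  then have "mm x (n y) = mm (mm x y) (n y)" by simp
  also have "\<dots> = bb" using assms massoc[of x y "n y"] by simp
  finally show "mm x (n y) = bb" .
next
  assume a: "mm x (n y) = bb"
  have "x = mm x (jj y (n y))" using assms by simp
  also have "\<dots> = jj (mm x y) (mm x (n y))" using assms mdist[of x y "n y"] by simp
  finally show "le x y" unfolding le_def using a assms by simp
qed

lemma n_anti: "x \<in> CB \<Longrightarrow> y \<in> CB \<Longrightarrow> le x y \<Longrightarrow> le (n y) (n x)"
  using le_compl[of x y] le_compl[of "n y" "n x"] mcomm[of x "n y"] by simp

lemma G_t[simp]: "tG B tt = tt"
proof -
  have "le (tP B tt) tt" by simp
  then have "le tt (tG B tt)" using adjG[of tt tt] by simp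
  then show ?thesis using le_antisym[of tt "tG B tt"] by simp
qed

lemma PG: "x \<in> CB \<Longrightarrow> le (tP B (tG B x)) x" using adjG[of "tG B x" x] by simp
lemma GP: "x \<in> CB \<Longrightarrow> le x (tG B (tP B x))" using adjG[of x "tP B x"] by simp

lemma G_mono: assumes "x \<in> CB" "y \<in> CB" "le x y" shows "le (tG B x) (tG B y)"
proof -
  have "le (tP B (tG B x)) y" using PG[of x] le_trans[of _ x y] assms by simp
  then show ?thesis using adjG assms by simp
qed

lemma P_mono: assumes "x \<in> CB" "y \<in> CB" "le x y" shows "le (tP B x) (tP B y)"
proof -
  have "le x (tG B (tP B y))" using GP[of y] le_trans[of x y] assms by simp
  then show ?thesis using adjG assms by simp
qed

lemma G_m: assumes "x \<in> CB" "y \<in> CB" shows "tG B (mm x y) = mm (tG B x) (tG B y)"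
proof (rule le_antisym)
  show "le (tG B (mm x y)) (mm (tG B x) (tG B y))"
    using G_mono[of "mm x y" x] G_mono[of "mm x y" y] assms by (simp add: le_mI)
  have "le (tP B (mm (tG B x) (tG B y))) x"
    using adjG[of "mm (tG B x) (tG B y)" x] assms by simp
  moreover have "le (tP B (mm (tG B x) (tG B y))) y"
    using adjG[of "mm (tG B x) (tG B y)" y] assms by simp
  ultimately have "le (tP B (mm (tG B x) (tG B y))) (mm x y)" using assms by (simp add: le_mI)
  then show "le (mm (tG B x) (tG B y)) (tG B (mm x y))" using adjG assms by simp
qed (use assms in simp_all)

lemma P_b[simp]: "tP B bb = bb"
proof -
  have "le bb (tG B bb)" by simp
  then have "le (tP B bb) bb" using adjG[of bb bb] by simp
  then show ?thesis using le_antisym[of "tP B bb" bb] by simp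
qed

lemma P_j: assumes "x \<in> CB" "y \<in> CB" shows "tP B (jj x y) = jj (tP B x) (tP B y)"
proof (rule le_antisym)
  show "le (jj (tP B x) (tP B y)) (tP B (jj x y))"
    using P_mono[of x "jj x y"] P_mono[of y "jj x y"] assms by (simp add: le_jI)
  have "le x (tG B (jj (tP B x) (tP B y)))"
    using adjG[of x "jj (tP B x) (tP B y)"] assms by simp
  moreover have "le y (tG B (jj (tP B x) (tP B y)))"
    using adjG[of y "jj (tP B x) (tP B y)"] assms by simp
  ultimately have "le (jj x y) (tG B (jj (tP B x) (tP B y)))" using assms by (simp add: le_jI)
  then show "le (tP B (jj x y)) (jj (tP B x) (tP B y))" using adjG assms by simp
qed (use assms in simp_all)

lemma H_P: "x \<in> CB \<Longrightarrow> tH B x = n (tP B (n x))"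
  unfolding tP_def by simp

end

lemma M_whb: assumes "tense_algebra B" shows "whb_algebra (Mfun B)"
proof -
  interpret TBA B using assms by (simp add: TBA_def)
  have wle: "\<And>x y. wle (Mfun B) x y = le x y" unfolding wle_def le_def Mfun_def by simp
  have bdlM: "bdl (wcar (Mfun B)) (wmeet (Mfun B)) (wjoin (Mfun B)) (wbot (Mfun B)) (wtop (Mfun B))"
    unfolding Mfun_def using bdl by simp
  show ?thesis unfolding whb_algebra_def wle
  proof (intro conjI bdlM ballI)
    fix a b assume ab: "a \<in> wcar (Mfun B)" "b \<in> wcar (Mfun B)"
    then show "wimp (Mfun B) a b \<in> wcar (Mfun B)" "wcoimp (Mfun B) a b \<in> wcar (Mfun B)"
      unfolding Mfun_def by simp_all
  next
    fix a b c assume "a \<in> wcar (Mfun B)" "b \<in> wcar (Mfun B)" "c \<in> wcar (Mfun B)"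
    then have C: "a \<in> CB" "b \<in> CB" "c \<in> CB" unfolding Mfun_def by simp_all
    show "wimp (Mfun B) a a = wtop (Mfun B)"
      unfolding Mfun_def using C by simp
    show "wimp (Mfun B) a (wmeet (Mfun B) b c) = wmeet (Mfun B) (wimp (Mfun B) a b) (wimp (Mfun B) a c)"
      unfolding Mfun_def using C by (simp add: jdist G_m)
    show "wimp (Mfun B) (wjoin (Mfun B) a b) c = wmeet (Mfun B) (wimp (Mfun B) a c) (wimp (Mfun B) b c)"
      unfolding Mfun_def using C by (simp add: dm_j jdist2 G_m)
    show "le (wmeet (Mfun B) (wimp (Mfun B) a b) (wimp (Mfun B) b c)) (wimp (Mfun B) a c)"
    proof -
      have "le (mm (jj (n a) b) (jj (n b) c)) (jj (n a) c)"
      proof -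
        have e1: "mm (jj (n a) b) (jj (n b) c) = jj (mm (n a) (jj (n b) c)) (mm b (jj (n b) c))"
          using C mdist2 by simp
        have e2: "mm b (jj (n b) c) = mm b c" using C mdist by simp
        have "le (mm (n a) (jj (n b) c)) (n a)" using C by simp
        moreover have "le (mm b c) c" using C by simp
        ultimately show ?thesis unfolding e1 e2 using C le_mono_j by simp
      qed
      then have "le (tG B (mm (jj (n a) b) (jj (n b) c))) (tG B (jj (n a) c))"
        using C G_mono by simp
      then show ?thesis unfolding Mfun_def using C G_m by simp
    qed
    show "wcoimp (Mfun B) a a = wbot (Mfun B)"
      unfolding Mfun_def using C by simp
    show "wcoimp (Mfun B) (wjoin (Mfun B) a b) c = wjoin (Mfun B) (wcoimp (Mfun B) a c) (wcoimp (Mfun B) b c)"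
      unfolding Mfun_def using C by (simp add: mdist2 P_j)
    show "wcoimp (Mfun B) a (wmeet (Mfun B) b c) = wjoin (Mfun B) (wcoimp (Mfun B) a b) (wcoimp (Mfun B) a c)"
      unfolding Mfun_def using C by (simp add: dm_m mdist P_j)
    show "le (wcoimp (Mfun B) a c) (wjoin (Mfun B) (wcoimp (Mfun B) a b) (wcoimp (Mfun B) b c))"
    proof -
      have "le (mm a (n c)) (jj (mm a (n b)) (mm b (n c)))"
      proof -
        have e1: "mm a (n c) = mm (mm a (n c)) (jj b (n b))" using C by simp
        have e2: "mm (mm a (n c)) (jj b (n b)) = jj (mm (mm a (n c)) b) (mm (mm a (n c)) (n b))"
          using C mdist[of "mm a (n c)" b "n b"] by simp
        have "le (mm (mm a (n c)) b) (mm b (n c))"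
          using C massoc[of a "n c" b] mcomm[of "n c" b] by (simp add: le_mono_m)
        moreover have "le (mm (mm a (n c)) (n b)) (mm a (n b))"
          using C massoc[of a "n c" "n b"] mcomm[of "n c" "n b"] massoc[of a "n b" "n c"] le_m1[of "mm a (n b)" "n c"] by simp
        ultimately have "le (jj (mm (mm a (n c)) b) (mm (mm a (n c)) (n b))) (jj (mm b (n c)) (mm a (n b)))"
          using C le_mono_j by simp
        then show ?thesis using e1 e2 C jcomm[of "mm b (n c)" "mm a (n b)"] by simp
      qed
      then have "le (tP B (mm a (n c))) (tP B (jj (mm a (n b)) (mm b (n c))))"
        using C P_mono by simp
      then show ?thesis unfolding Mfun_def using C P_j by simp
    qed
    show "le (wmeet (Mfun B) a (wcoimp (Mfun B) (wimp (Mfun B) a b) (wbot (Mfun B)))) b"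
    proof -
      have "le (tP B (tG B (jj (n a) b))) (jj (n a) b)" using C PG by simp
      then have "le (mm a (tP B (tG B (jj (n a) b)))) (mm a (jj (n a) b))" using C le_mono_m by simp
      moreover have "mm a (jj (n a) b) = mm a b" using C mdist by simp
      moreover have "le (mm a b) b" using C by simp
      ultimately have "le (mm a (tP B (tG B (jj (n a) b)))) b"
        using C le_trans[of "mm a (tP B (tG B (jj (n a) b)))" "mm a b" b] by simp
      then show ?thesis unfolding Mfun_def using C by simp
    qed
    show "le a (wjoin (Mfun B) b (wimp (Mfun B) (wtop (Mfun B)) (wcoimp (Mfun B) a b)))"
    proof -
      have e: "a = jj (mm a b) (mm a (n b))"
        using C mdist[of a b "n b"] by simp
      have "le (mm a b) b" using C by simp
      moreover have "le (mm a (n b)) (tG B (tP B (mm a (n b))))" using C GP by simp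
      ultimately have "le (jj (mm a b) (mm a (n b))) (jj b (tG B (tP B (mm a (n b)))))"
        using C le_mono_j by simp
      then show ?thesis unfolding Mfun_def using C e by simp
    qed
  qed
qed

lemma M_full:
  assumes TB: "tense_algebra B" and TB': "tense_algebra B'" and f: "whb_hom (Mfun B) (Mfun B') f"
  shows "tba_hom B B' f"
proof -
  interpret B1: TBA B using TB by (simp add: TBA_def)
  interpret B2: TBA B' using TB' by (simp add: TBA_def)
  have fC: "\<And>x. x \<in> tcar B \<Longrightarrow> f x \<in> tcar B'" using f unfolding whb_hom_def Mfun_def by simp
  have fm: "\<And>x y. x \<in> tcar B \<Longrightarrow> y \<in> tcar B \<Longrightarrow> f (tmeet B x y) = tmeet B' (f x) (f y)"
    using f unfolding whb_hom_def Mfun_def by simp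
  have fj: "\<And>x y. x \<in> tcar B \<Longrightarrow> y \<in> tcar B \<Longrightarrow> f (tjoin B x y) = tjoin B' (f x) (f y)"
    using f unfolding whb_hom_def Mfun_def by simp
  have fi: "\<And>x y. x \<in> tcar B \<Longrightarrow> y \<in> tcar B \<Longrightarrow> f (tG B (tjoin B (tneg B x) y)) = tG B' (tjoin B' (tneg B' (f x)) (f y))"
    using f unfolding whb_hom_def Mfun_def by simp
  have fc: "\<And>x y. x \<in> tcar B \<Longrightarrow> y \<in> tcar B \<Longrightarrow> f (tP B (tmeet B x (tneg B y))) = tP B' (tmeet B' (f x) (tneg B' (f y)))"
    using f unfolding whb_hom_def Mfun_def by simp
  have fb: "f (tbot B) = tbot B'" and ft: "f (ttop B) = ttop B'"
    using f unfolding whb_hom_def Mfun_def by simp_all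
  have fn: "f (tneg B x) = tneg B' (f x)" if x: "x \<in> tcar B" for x
  proof -
    have "tmeet B' (f x) (f (tneg B x)) = tbot B'" using fm[of x "tneg B x"] x fb by simp
    moreover have "tjoin B' (f x) (f (tneg B x)) = ttop B'" using fj[of x "tneg B x"] x ft by simp
    ultimately show ?thesis using B2.compl_unique x fC by simp
  qed
  have fG: "f (tG B x) = tG B' (f x)" if x: "x \<in> tcar B" for x
    using fi[of "ttop B" x] x ft fC by simp
  have fP: "f (tP B x) = tP B' (f x)" if x: "x \<in> tcar B" for x
    using fc[of x "tbot B"] x fb fC by simp
  have fH: "f (tH B x) = tH B' (f x)" if x: "x \<in> tcar B" for x
  proof -
    have "f (tH B x) = f (tneg B (tP B (tneg B x)))" using B1.H_P x by simp
    also have "\<dots> = tneg B' (tP B' (tneg B' (f x)))" using fn fP x by simp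
    also have "\<dots> = tH B' (f x)" using B2.H_P fC x by simp
    finally show ?thesis .
  qed
  show ?thesis unfolding tba_hom_def using fC fm fj fn fG fH fb ft by simp
qed



context DLat begin

lemma bigJ_map_m: "x \<in> C \<Longrightarrow> set ys \<subseteq> C \<Longrightarrow> bigJ (map (\<lambda>y. m x y) ys) = m x (bigJ ys)"
proof (induction ys)
  case Nil then show ?case by simp
next
  case (Cons y ys) then show ?case using mdist[of x y "bigJ ys"] by simp
qed

lemma bigJ_concat: "set xs \<subseteq> C \<Longrightarrow> set ys \<subseteq> C \<Longrightarrow>
  bigJ (concat (map (\<lambda>x. map (\<lambda>y. m x y) ys) xs)) = m (bigJ xs) (bigJ ys)"
proof (induction xs)
  case Nil then show ?case by simp
next
  case (Cons x xs)
  have s: "set (map (\<lambda>y. m x y) ys) \<subseteq> C" "set (concat (map (\<lambda>x. map (\<lambda>y. m x y) ys) xs)) \<subseteq> C"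
    using Cons.prems by (auto simp: subset_iff)
  have "bigJ (concat (map (\<lambda>x. map (\<lambda>y. m x y) ys) (x # xs)))
      = j (bigJ (map (\<lambda>y. m x y) ys)) (bigJ (concat (map (\<lambda>x. map (\<lambda>y. m x y) ys) xs)))"
    using bigJ_app[OF s] by simp
  also have "\<dots> = j (m x (bigJ ys)) (m (bigJ xs) (bigJ ys))"
    using Cons bigJ_map_m by simp
  also have "\<dots> = m (j x (bigJ xs)) (bigJ ys)" using mdist2 Cons.prems by simp
  finally show ?case by simp
qed

end

context TBA begin

lemma dm_bigJ: "set xs \<subseteq> CB \<Longrightarrow> n (bigJ xs) = bigM (map n xs)"
  by (induction xs) (auto simp: dm_j)

lemma G_bigM: "set xs \<subseteq> CB \<Longrightarrow> tG B (bigM xs) = bigM (map (tG B) xs)"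
  by (induction xs) (auto simp: G_m)

lemma P_bigJ: "set xs \<subseteq> CB \<Longrightarrow> tP B (bigJ xs) = bigJ (map (tP B) xs)"
  by (induction xs) (auto simp: P_j)

lemma ba_key: assumes C: "x \<in> CB" "c \<in> CB" "d \<in> CB" "r \<in> CB"
  and h1: "le (mm x (n c)) r" and h2: "le (mm x d) r"
  shows "le x (jj (mm c (n d)) r)"
proof -
  let ?Z = "jj (mm c (n d)) r"
  have ZC: "?Z \<in> CB" using C by simp
  have rZ: "le r ?Z" using C by simp
  have cZ: "le (mm c (n d)) ?Z" using C by simp
  have ex: "x = jj (mm x c) (mm x (n c))" using C mdist[of x c "n c"] by simp
  have exc: "mm x c = jj (mm (mm x c) d) (mm (mm x c) (n d))" using C mdist[of "mm x c" d "n d"] by simp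
  have "le (mm (mm x c) d) (mm x d)"
    using C massoc[of x c d] mcomm[of c d] massoc[of x d c] le_m1[of "mm x d" c] by simp
  then have a1: "le (mm (mm x c) d) ?Z" using le_trans[OF _ _ _ _ h2] le_trans[OF _ _ _ _ rZ] C by simp
  have "le (mm (mm x c) (n d)) (mm c (n d))"
    using C massoc[of x c "n d"] le_m2[of x "mm c (n d)"] by simp
  then have a2: "le (mm (mm x c) (n d)) ?Z" using le_trans[OF _ _ _ _ cZ] C by simp
  have "le (mm x c) ?Z" using le_jI[OF _ _ ZC a1 a2] exc C by simp
  moreover have "le (mm x (n c)) ?Z" using le_trans[OF _ _ _ h1 rZ] C by simp
  ultimately show ?thesis using le_jI[of "mm x c" "mm x (n c)" ?Z] ex C by simp
qed

end

locale UP = A: WHB A + B: TBA B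
  for A :: "('a, 'z) whb_scheme" and B :: "('b, 'y) tba_scheme" +
  fixes f :: "'a \<Rightarrow> 'b"
  assumes F: "whb_hom A (Mfun B) f"
begin

lemma fC[simp]: "a \<in> wcar A \<Longrightarrow> f a \<in> tcar B"
  using F unfolding whb_hom_def Mfun_def by simp
lemma fops: assumes "a \<in> wcar A" "b \<in> wcar A"
  shows "f (wmeet A a b) = tmeet B (f a) (f b)" "f (wjoin A a b) = tjoin B (f a) (f b)"
    "f (wimp A a b) = tG B (tjoin B (tneg B (f a)) (f b))"
    "f (wcoimp A a b) = tP B (tmeet B (f a) (tneg B (f b)))"
  using F assms unfolding whb_hom_def Mfun_def by simp_all
lemma fb[simp]: "f (wbot A) = tbot B" and ft[simp]: "f (wtop A) = ttop B"
  using F unfolding whb_hom_def Mfun_def by simp_all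

lemma f_le: "a \<in> wcar A \<Longrightarrow> b \<in> wcar A \<Longrightarrow> A.le a b \<Longrightarrow> B.le (f a) (f b)"
proof -
  assume ab: "a \<in> wcar A" "b \<in> wcar A" "A.le a b"
  then have "wmeet A a b = a" unfolding A.le_def by simp
  then have "f (wmeet A a b) = f a" by simp
  then show ?thesis unfolding B.le_def using fops(1)[of a b] ab by simp
qed

lemma f_bigM: "set xs \<subseteq> wcar A \<Longrightarrow> f (A.bigM xs) = B.bigM (map f xs)"
  by (induction xs) (auto simp: fops)
lemma f_bigJ: "set xs \<subseteq> wcar A \<Longrightarrow> f (A.bigJ xs) = B.bigJ (map f xs)"
  by (induction xs) (auto simp: fops)

definition tm :: "'a \<times> 'a \<Rightarrow> 'b" where "tm p = tmeet B (f (fst p)) (tneg B (f (snd p)))"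
definition val :: "('a \<times> 'a) list \<Rightarrow> 'b" where "val K = B.bigJ (map tm K)"

lemma tmC[simp]: "p \<in> wcar A \<times> wcar A \<Longrightarrow> tm p \<in> tcar B"
  unfolding tm_def by auto
lemma valC[simp]: "set K \<subseteq> wcar A \<times> wcar A \<Longrightarrow> val K \<in> tcar B"
  unfolding val_def by (intro B.bigJ_C) auto
lemma val_simps[simp]: "val [] = tbot B" "val (p # K) = tjoin B (tm p) (val K)"
  unfolding val_def by simp_all
lemma val_app: "set K \<subseteq> wcar A \<times> wcar A \<Longrightarrow> set K' \<subseteq> wcar A \<times> wcar A \<Longrightarrow> val (K @ K') = tjoin B (val K) (val K')"
proof -
  assume K: "set K \<subseteq> wcar A \<times> wcar A" and K': "set K' \<subseteq> wcar A \<times> wcar A"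
  have "set (map tm K) \<subseteq> tcar B" "set (map tm K') \<subseteq> tcar B" using K K' by auto
  then show ?thesis unfolding val_def by (simp add: B.bigJ_app)
qed

lemma wd1: "set K \<subseteq> wcar A \<times> wcar A \<Longrightarrow> a \<in> wcar A \<Longrightarrow> b \<in> wcar A \<Longrightarrow>
  sigma A a - sigma A b \<subseteq> A.Dn K \<Longrightarrow> B.le (tm (a, b)) (val K)"
proof (induction K arbitrary: a b)
  case Nil
  then have "sigma A a \<subseteq> sigma A b" by simp
  then have "A.le a b" using A.sigma_le Nil by simp
  then have "B.le (f a) (f b)" using f_le Nil by simp
  then have "tm (a, b) = tbot B" unfolding tm_def using B.le_compl Nil by simp
  then show ?case by simp
next
  case (Cons p K)
  obtain c d where p: "p = (c, d)" by fastforce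
  have C: "c \<in> wcar A" "d \<in> wcar A" "set K \<subseteq> wcar A \<times> wcar A" using Cons.prems p by auto
  have ab: "a \<in> wcar A" "b \<in> wcar A" using Cons.prems by auto
  have sub: "sigma A a - sigma A b \<subseteq> (sigma A c - sigma A d) \<union> A.Dn K" using Cons.prems p by simp
  have s1: "sigma A a - sigma A (wjoin A b c) \<subseteq> A.Dn K"
    using sub A.sigma_j[of b c] ab C by auto
  have s2: "sigma A (wmeet A a d) - sigma A b \<subseteq> A.Dn K"
    using sub A.sigma_m[of a d] ab C by auto
  have i1: "B.le (tm (a, wjoin A b c)) (val K)" using Cons.IH[OF C(3) ab(1) _ s1] ab C by simp
  have i2: "B.le (tm (wmeet A a d, b)) (val K)" using Cons.IH[OF C(3) _ ab(2) s2] ab C by simp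
  let ?x = "tm (a, b)"
  have e1: "tm (a, wjoin A b c) = tmeet B ?x (tneg B (f c))"
    unfolding tm_def using ab C fops B.dm_j B.massoc by simp
  have e2: "tm (wmeet A a d, b) = tmeet B ?x (f d)"
    unfolding tm_def using ab C fops B.massoc[of "f a" "f d" "tneg B (f b)"] B.mcomm[of "f d" "tneg B (f b)"]
      B.massoc[of "f a" "tneg B (f b)" "f d"] by simp
  have "B.le ?x (tjoin B (tmeet B (f c) (tneg B (f d))) (val K))"
    using B.ba_key[of ?x "f c" "f d" "val K"] i1 i2 e1 e2 ab C by simp
  then show ?case using p by (simp add: tm_def)
qed

lemma wd: "set K \<subseteq> wcar A \<times> wcar A \<Longrightarrow> set K' \<subseteq> wcar A \<times> wcar A \<Longrightarrow>
  A.Dn K \<subseteq> A.Dn K' \<Longrightarrow> B.le (val K) (val K')"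
proof (induction K)
  case Nil then show ?case using valC by simp
next
  case (Cons p K)
  have p: "fst p \<in> wcar A" "snd p \<in> wcar A" using Cons.prems by auto
  have "B.le (tm (fst p, snd p)) (val K')"
    using wd1[OF Cons.prems(2) p] Cons.prems by simp
  moreover have "B.le (val K) (val K')" using Cons by simp
  ultimately show ?case using B.le_jI Cons.prems p by simp
qed

lemma wd_eq: "set K \<subseteq> wcar A \<times> wcar A \<Longrightarrow> set K' \<subseteq> wcar A \<times> wcar A \<Longrightarrow>
  A.Dn K = A.Dn K' \<Longrightarrow> val K = val K'"
  using wd[of K K'] wd[of K' K] B.le_antisym by simp

definition g :: "'a set set \<Rightarrow> 'b" where
  "g U = val (SOME K. set K \<subseteq> wcar A \<times> wcar A \<and> U = A.Dn K)"

lemma g_Dn: assumes "set K \<subseteq> wcar A \<times> wcar A" shows "g (A.Dn K) = val K"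
proof -
  let ?K = "SOME K'. set K' \<subseteq> wcar A \<times> wcar A \<and> A.Dn K = A.Dn K'"
  have "set ?K \<subseteq> wcar A \<times> wcar A \<and> A.Dn K = A.Dn ?K"
    by (rule someI[of "\<lambda>K'. set K' \<subseteq> wcar A \<times> wcar A \<and> A.Dn K = A.Dn K'" K]) (use assms in simp)
  then have "val ?K = val K" using wd_eq[of ?K K] assms by simp
  then show ?thesis unfolding g_def by simp
qed

lemma gC: "U \<in> clopens A \<Longrightarrow> g U \<in> tcar B"
proof -
  assume "U \<in> clopens A"
  then obtain K where "set K \<subseteq> wcar A \<times> wcar A" "U = A.Dn K" using A.clopens_Dn by blast
  then show ?thesis using g_Dn valC by simp
qed

lemma g_sigma: assumes "a \<in> wcar A" shows "g (sigma A a) = f a"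
proof -
  have "sigma A a = A.Dn [(a, wbot A)]" using A.sigma_b by simp
  then show ?thesis using g_Dn[of "[(a, wbot A)]"] assms by (simp add: tm_def)
qed

lemma g_empty: "g {} = tbot B" using g_Dn[of "[]"] by simp
lemma g_X: "g (Xsp A) = ttop B"
proof -
  have "Xsp A = A.Dn [(wtop A, wbot A)]" using A.sigma_b A.sigma_t by simp
  then show ?thesis using g_Dn[of "[(wtop A, wbot A)]"] by (simp add: tm_def)
qed

lemma g_Un: assumes "U \<in> clopens A" "V \<in> clopens A" shows "g (U \<union> V) = tjoin B (g U) (g V)"
proof -
  obtain K K' where K: "set K \<subseteq> wcar A \<times> wcar A" "U = A.Dn K" "set K' \<subseteq> wcar A \<times> wcar A" "V = A.Dn K'"
    using A.clopens_Dn[OF assms(1)] A.clopens_Dn[OF assms(2)] by blast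
  have "U \<union> V = A.Dn (K @ K')" using K A.Dn_app by simp
  then show ?thesis using g_Dn K val_app by simp
qed

definition prodK :: "('a \<times> 'a) list \<Rightarrow> ('a \<times> 'a) list \<Rightarrow> ('a \<times> 'a) list" where
  "prodK K K' = concat (map (\<lambda>p. map (\<lambda>q. (wmeet A (fst p) (fst q), wjoin A (snd p) (snd q))) K') K)"

lemma prodK_C: "set K \<subseteq> wcar A \<times> wcar A \<Longrightarrow> set K' \<subseteq> wcar A \<times> wcar A \<Longrightarrow> set (prodK K K') \<subseteq> wcar A \<times> wcar A"
  unfolding prodK_def by (auto simp: subset_iff)

lemma prodK_Dn: assumes "set K \<subseteq> wcar A \<times> wcar A" "set K' \<subseteq> wcar A \<times> wcar A"
  shows "A.Dn (prodK K K') = A.Dn K \<inter> A.Dn K'"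
proof (rule set_eqI)
  fix P
  show "P \<in> A.Dn (prodK K K') \<longleftrightarrow> P \<in> A.Dn K \<inter> A.Dn K'"
  proof (cases "P \<in> Xsp A")
    case True
    then have pP: "A.pf P" using A.XA by simp
    have "P \<in> A.Dn (prodK K K') \<longleftrightarrow> (\<exists>p\<in>set K. \<exists>q\<in>set K'. wmeet A (fst p) (fst q) \<in> P \<and> wjoin A (snd p) (snd q) \<notin> P)"
      unfolding A.Dn_mem prodK_def using True by auto
    also have "\<dots> \<longleftrightarrow> (\<exists>p\<in>set K. \<exists>q\<in>set K'. (fst p \<in> P \<and> snd p \<notin> P) \<and> (fst q \<in> P \<and> snd q \<notin> P))"
    proof -
      have "\<And>p q. p \<in> set K \<Longrightarrow> q \<in> set K' \<Longrightarrow> (wmeet A (fst p) (fst q) \<in> P \<and> wjoin A (snd p) (snd q) \<notin> P)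
        \<longleftrightarrow> ((fst p \<in> P \<and> snd p \<notin> P) \<and> (fst q \<in> P \<and> snd q \<notin> P))"
        using assms pP by (auto simp: subset_iff)
      then show ?thesis by blast
    qed
    also have "\<dots> \<longleftrightarrow> P \<in> A.Dn K \<inter> A.Dn K'" unfolding Int_iff A.Dn_mem using True by blast
    finally show ?thesis .
  next
    case False then show ?thesis using A.Dn_sub by blast
  qed
qed

lemma val_prodK: assumes K: "set K \<subseteq> wcar A \<times> wcar A" and K': "set K' \<subseteq> wcar A \<times> wcar A"
  shows "val (prodK K K') = tmeet B (val K) (val K')"
proof -
  have pq: "tm (wmeet A (fst p) (fst q), wjoin A (snd p) (snd q)) = tmeet B (tm p) (tm q)"
    if p: "p \<in> set K" and q: "q \<in> set K'" for p q
  proof -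
    have C: "fst p \<in> wcar A" "snd p \<in> wcar A" "fst q \<in> wcar A" "snd q \<in> wcar A" using p q K K' by auto
    let ?a = "f (fst p)" and ?b = "f (snd p)" and ?c = "f (fst q)" and ?d = "f (snd q)"
    have CB: "?a \<in> tcar B" "?b \<in> tcar B" "?c \<in> tcar B" "?d \<in> tcar B" using C by auto
    have "tm (wmeet A (fst p) (fst q), wjoin A (snd p) (snd q))
        = tmeet B (tmeet B ?a ?c) (tmeet B (tneg B ?b) (tneg B ?d))"
      unfolding tm_def using C fops B.dm_j by simp
    also have "\<dots> = tmeet B (tmeet B ?a (tneg B ?b)) (tmeet B ?c (tneg B ?d))"
      using CB B.massoc[of ?a ?c "tmeet B (tneg B ?b) (tneg B ?d)"] B.mlc[of ?c "tneg B ?b" "tneg B ?d"]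
        B.massoc[of ?a "tneg B ?b" "tmeet B ?c (tneg B ?d)"] by simp
    finally show ?thesis unfolding tm_def by simp
  qed
  have "map tm (prodK K K') = concat (map (\<lambda>p. map (\<lambda>q. tmeet B (tm p) (tm q)) K') K)"
    unfolding prodK_def map_concat map_map
  proof (rule arg_cong[where f = concat], rule map_cong[OF refl])
    fix p assume p: "p \<in> set K"
    show "(map tm \<circ> (\<lambda>p. map (\<lambda>q. (wmeet A (fst p) (fst q), wjoin A (snd p) (snd q))) K')) p =
          map (\<lambda>q. tmeet B (tm p) (tm q)) K'"
      unfolding comp_apply map_map by (rule map_cong[OF refl]) (use pq p in simp)
  qed
  also have "\<dots> = concat (map (\<lambda>x. map (\<lambda>y. tmeet B x y) (map tm K')) (map tm K))"
    by (simp add: map_map o_def)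
  finally have e: "map tm (prodK K K') = concat (map (\<lambda>x. map (\<lambda>y. tmeet B x y) (map tm K')) (map tm K))" .
  have s: "set (map tm K) \<subseteq> tcar B" "set (map tm K') \<subseteq> tcar B" using K K' by auto
  show ?thesis unfolding val_def e using B.bigJ_concat[OF s] by simp
qed

lemma g_Int: assumes "U \<in> clopens A" "V \<in> clopens A" shows "g (U \<inter> V) = tmeet B (g U) (g V)"
proof -
  obtain K K' where K: "set K \<subseteq> wcar A \<times> wcar A" "U = A.Dn K" "set K' \<subseteq> wcar A \<times> wcar A" "V = A.Dn K'"
    using A.clopens_Dn[OF assms(1)] A.clopens_Dn[OF assms(2)] by blast
  have "U \<inter> V = A.Dn (prodK K K')" using K prodK_Dn by simp
  then show ?thesis using g_Dn K val_prodK prodK_C by simp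
qed

lemma g_compl: assumes U: "U \<in> clopens A" shows "g (Xsp A - U) = tneg B (g U)"
proof -
  have U': "Xsp A - U \<in> clopens A" using A.clopen_compl U by simp
  have "tmeet B (g U) (g (Xsp A - U)) = tbot B"
    using g_Int[OF U U'] g_empty by simp
  moreover have "tjoin B (g U) (g (Xsp A - U)) = ttop B"
  proof -
    have "U \<union> (Xsp A - U) = Xsp A" using A.clopens_sub[OF U] by blast
    then show ?thesis using g_Un[OF U U'] g_X by simp
  qed
  moreover have "g U \<in> tcar B" "g (Xsp A - U) \<in> tcar B" using gC U U' by simp_all
  ultimately show ?thesis using B.compl_unique[of "g U" "g (Xsp A - U)"] by simp
qed

lemma g_G: assumes U: "U \<in> clopens A" shows "g (GA A U) = tG B (g U)"
proof -
  obtain K where K: "set K \<subseteq> wcar A \<times> wcar A" "U = Xsp A - A.Dn K" using A.clopens_coDn U by blast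
  have mC: "set (map (\<lambda>p. wimp A (fst p) (snd p)) K) \<subseteq> wcar A" using K by auto
  have "g (GA A U) = f (A.bigM (map (\<lambda>p. wimp A (fst p) (snd p)) K))"
    unfolding K(2) A.GA_Dn_sigma[OF K(1)] using g_sigma mC by simp
  also have "\<dots> = B.bigM (map (\<lambda>p. tG B (tjoin B (tneg B (f (fst p))) (f (snd p)))) K)"
    using f_bigM[OF mC] K fops by (auto simp: subset_iff intro!: arg_cong[where f = "B.bigM"])
  finally have 1: "g (GA A U) = B.bigM (map (\<lambda>p. tG B (tjoin B (tneg B (f (fst p))) (f (snd p)))) K)" .
  have "g U = tneg B (val K)" unfolding K(2) using g_compl g_Dn K A.clopen_Dn by simp
  also have "\<dots> = B.bigM (map (tneg B) (map tm K))"
  proof -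
    have tK: "set (map tm K) \<subseteq> tcar B" using K by auto
    show ?thesis unfolding val_def using B.dm_bigJ[OF tK] .
  qed
  also have "\<dots> = B.bigM (map (\<lambda>p. tjoin B (tneg B (f (fst p))) (f (snd p))) K)"
    using K B.dm_m unfolding tm_def by (auto simp: subset_iff intro!: arg_cong[where f = "B.bigM"])
  finally have gU: "g U = B.bigM (map (\<lambda>p. tjoin B (tneg B (f (fst p))) (f (snd p))) K)" .
  have tK: "set (map (\<lambda>p. tjoin B (tneg B (f (fst p))) (f (snd p))) K) \<subseteq> tcar B" using K by auto
  have 2: "tG B (g U) = B.bigM (map (tG B) (map (\<lambda>p. tjoin B (tneg B (f (fst p))) (f (snd p))) K))"
    unfolding gU by (rule B.G_bigM[OF tK])
  show ?thesis unfolding 1 2 by (simp add: o_def)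
qed

lemma g_H: assumes U: "U \<in> clopens A" shows "g (HA A U) = tH B (g U)"
proof -
  obtain K where K: "set K \<subseteq> wcar A \<times> wcar A" "U = Xsp A - A.Dn K" using A.clopens_coDn U by blast
  have cC: "set (map (\<lambda>p. wcoimp A (fst p) (snd p)) K) \<subseteq> wcar A" using K by auto
  have "g (HA A U) = tneg B (f (A.bigJ (map (\<lambda>p. wcoimp A (fst p) (snd p)) K)))"
    unfolding K(2) A.HA_Dn_sigma[OF K(1)] using g_sigma g_compl A.clopen_sigma cC by simp
  also have "f (A.bigJ (map (\<lambda>p. wcoimp A (fst p) (snd p)) K)) = B.bigJ (map (\<lambda>p. tP B (tm p)) K)"
    using f_bigJ[OF cC] K fops by (auto simp: subset_iff tm_def intro!: arg_cong[where f = "B.bigJ"])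
  also have "\<dots> = tP B (val K)"
  proof -
    have tK: "set (map tm K) \<subseteq> tcar B" using K by auto
    show ?thesis unfolding val_def using B.P_bigJ[OF tK] by (simp add: o_def)
  qed
  finally have 1: "g (HA A U) = tneg B (tP B (val K))" .
  have "g U = tneg B (val K)" unfolding K(2) using g_compl g_Dn K A.clopen_Dn by simp
  then have 2: "tH B (g U) = tneg B (tP B (val K))" using B.H_P K by simp
  show ?thesis unfolding 1 2 ..
qed

lemma g_hom: "tba_hom (Tfun A) B g"
  unfolding tba_hom_def
proof (intro conjI ballI)
  fix x assume "x \<in> tcar (Tfun A)"
  then have x: "x \<in> clopens A" unfolding Tfun_def by simp
  show "g x \<in> tcar B" using gC x by simp
  show "g (tneg (Tfun A) x) = tneg B (g x)" unfolding Tfun_def using g_compl x by simp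
  show "g (tG (Tfun A) x) = tG B (g x)" unfolding Tfun_def using g_G x by simp
  show "g (tH (Tfun A) x) = tH B (g x)" unfolding Tfun_def using g_H x by simp
next
  fix x y assume "x \<in> tcar (Tfun A)" "y \<in> tcar (Tfun A)"
  then have xy: "x \<in> clopens A" "y \<in> clopens A" unfolding Tfun_def by simp_all
  show "g (tmeet (Tfun A) x y) = tmeet B (g x) (g y)" unfolding Tfun_def using g_Int xy by simp
  show "g (tjoin (Tfun A) x y) = tjoin B (g x) (g y)" unfolding Tfun_def using g_Un xy by simp
next
  show "g (tbot (Tfun A)) = tbot B" unfolding Tfun_def using g_empty by simp
  show "g (ttop (Tfun A)) = ttop B" unfolding Tfun_def using g_X by simp
qed

lemma g_unique: assumes h: "tba_hom (Tfun A) B g'" and hs: "\<forall>a\<in>wcar A. g' (sigma A a) = f a"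
  shows "\<forall>U\<in>tcar (Tfun A). g' U = g U"
proof
  have hC: "\<And>x. x \<in> clopens A \<Longrightarrow> g' x \<in> tcar B" using h unfolding tba_hom_def Tfun_def by simp
  have hm: "\<And>x y. x \<in> clopens A \<Longrightarrow> y \<in> clopens A \<Longrightarrow> g' (x \<inter> y) = tmeet B (g' x) (g' y)"
    using h unfolding tba_hom_def Tfun_def by simp
  have hj: "\<And>x y. x \<in> clopens A \<Longrightarrow> y \<in> clopens A \<Longrightarrow> g' (x \<union> y) = tjoin B (g' x) (g' y)"
    using h unfolding tba_hom_def Tfun_def by simp
  have hn: "\<And>x. x \<in> clopens A \<Longrightarrow> g' (Xsp A - x) = tneg B (g' x)"
    using h unfolding tba_hom_def Tfun_def by simp
  have hb: "g' {} = tbot B" using h unfolding tba_hom_def Tfun_def by simp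
  have D: "set K \<subseteq> wcar A \<times> wcar A \<Longrightarrow> g' (A.Dn K) = val K" for K
  proof (induction K)
    case Nil then show ?case using hb by simp
  next
    case (Cons p K)
    have p: "fst p \<in> wcar A" "snd p \<in> wcar A" "set K \<subseteq> wcar A \<times> wcar A" using Cons.prems by auto
    have e: "A.Dn (p # K) = (sigma A (fst p) \<inter> (Xsp A - sigma A (snd p))) \<union> A.Dn K"
      using A.sigma_sub by auto
    have cl: "sigma A (fst p) \<in> clopens A" "sigma A (snd p) \<in> clopens A" "A.Dn K \<in> clopens A"
      using p A.clopen_sigma A.clopen_Dn by auto
    have cl2: "Xsp A - sigma A (snd p) \<in> clopens A" using cl A.clopen_compl by simp
    have cl3: "sigma A (fst p) \<inter> (Xsp A - sigma A (snd p)) \<in> clopens A" using cl cl2 A.clopen_Int by simp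
    have "g' (A.Dn (p # K)) = tjoin B (tmeet B (g' (sigma A (fst p))) (tneg B (g' (sigma A (snd p))))) (g' (A.Dn K))"
      unfolding e using hj[OF cl3 cl(3)] hm[OF cl(1) cl2] hn[OF cl(2)] by simp
    then show ?case using Cons p hs by (simp add: tm_def)
  qed
  fix U assume "U \<in> tcar (Tfun A)"
  then have "U \<in> clopens A" unfolding Tfun_def by simp
  then obtain K where "set K \<subseteq> wcar A \<times> wcar A" "U = A.Dn K" using A.clopens_Dn by blast
  then show "g' U = g U" using D g_Dn by simp
qed

end


lemma c1: assumes "whb_algebra A" shows "tense_algebra (Tfun A) \<and> whb_hom A (Mfun (Tfun A)) (sigma A)"
proof -
  interpret WHB A using assms by (simp add: WHB_def)
  show ?thesis using T_tense sigma_hom by simp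
qed

lemma c3: assumes "whb_algebra A" "whb_algebra A'" "whb_hom A A' h"
  shows "tba_hom (Tfun A) (Tfun A') (Tmor A A' h) \<and> (\<forall>a\<in>wcar A. Tmor A A' h (sigma A a) = sigma A' (h a))"
proof -
  interpret WHB2 A A' h unfolding WHB2_def WHB2_axioms_def WHB_def using assms by simp
  show ?thesis using Tmor_hom Tmor_sigma by simp
qed

lemma c4: assumes "whb_algebra A" "tense_algebra B" "whb_hom A (Mfun B) f"
  shows "\<exists>g. tba_hom (Tfun A) B g \<and> (\<forall>a\<in>wcar A. g (sigma A a) = f a) \<and>
            (\<forall>g'. tba_hom (Tfun A) B g' \<and> (\<forall>a\<in>wcar A. g' (sigma A a) = f a) \<longrightarrow>
                  (\<forall>U\<in>tcar (Tfun A). g' U = g U))"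
proof -
  interpret UP A B f unfolding UP_def UP_axioms_def WHB_def TBA_def using assms by simp
  show ?thesis using g_hom g_sigma g_unique by blast
qed

lemma c5: assumes "whb_algebra A" "whb_algebra A'" "whb_hom A A' h" "inj_on h (wcar A)"
  shows "inj_on (Tmor A A' h) (tcar (Tfun A))"
proof -
  interpret WHB2 A A' h unfolding WHB2_def WHB2_axioms_def WHB_def using assms by simp
  show ?thesis using Tmor_inj assms(4) by simp
qed

theorem theorem6p3:
  shows
  "(\<forall>A :: 'a whb. whb_algebra A \<longrightarrow>
       tense_algebra (Tfun A) \<and> whb_hom A (Mfun (Tfun A)) (sigma A))
   \<and> (\<forall>B :: 'b tba. tense_algebra B \<longrightarrow> whb_algebra (Mfun B))
   \<and> (\<forall>(A :: 'a whb) (A' :: 'c whb) h. whb_algebra A \<and> whb_algebra A' \<and> whb_hom A A' h \<longrightarrow>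
       tba_hom (Tfun A) (Tfun A') (Tmor A A' h) \<and>
       (\<forall>a\<in>wcar A. Tmor A A' h (sigma A a) = sigma A' (h a)))
   \<and> (\<forall>(A :: 'a whb) (B :: 'b tba) f.
       whb_algebra A \<and> tense_algebra B \<and> whb_hom A (Mfun B) f \<longrightarrow>
       (\<exists>g. tba_hom (Tfun A) B g \<and> (\<forall>a\<in>wcar A. g (sigma A a) = f a) \<and>
            (\<forall>g'. tba_hom (Tfun A) B g' \<and> (\<forall>a\<in>wcar A. g' (sigma A a) = f a) \<longrightarrow>
                  (\<forall>U\<in>tcar (Tfun A). g' U = g U))))
   \<and> (\<forall>(A :: 'a whb) (A' :: 'c whb) h.
       whb_algebra A \<and> whb_algebra A' \<and> whb_hom A A' h \<and> inj_on h (wcar A) \<longrightarrow>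
       inj_on (Tmor A A' h) (tcar (Tfun A)))
   \<and> (\<forall>(A :: 'a whb) (A' :: 'c whb) h1 h2.
       whb_algebra A \<and> whb_algebra A' \<and> whb_hom A A' h1 \<and> whb_hom A A' h2 \<and>
       (\<forall>U\<in>tcar (Tfun A). Tmor A A' h1 U = Tmor A A' h2 U) \<longrightarrow>
       (\<forall>a\<in>wcar A. h1 a = h2 a))
   \<and> (\<forall>(B :: 'b tba) (B' :: 'd tba) f.
       tense_algebra B \<and> tense_algebra B' \<and> whb_hom (Mfun B) (Mfun B') f \<longrightarrow>
       tba_hom B B' f)
   \<and> (\<forall>(B :: 'b tba) (B' :: 'd tba) g1 g2.
       tense_algebra B \<and> tense_algebra B' \<and> tba_hom B B' g1 \<and> tba_hom B B' g2 \<and>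
       (\<forall>x\<in>wcar (Mfun B). g1 x = g2 x) \<longrightarrow>
       (\<forall>x\<in>tcar B. g1 x = g2 x))"
proof -
  have P1: "(\<forall>A :: 'a whb. whb_algebra A \<longrightarrow>
       tense_algebra (Tfun A) \<and> whb_hom A (Mfun (Tfun A)) (sigma A))"
    using c1 by blast
  have P2: "(\<forall>B :: 'b tba. tense_algebra B \<longrightarrow> whb_algebra (Mfun B))"
    using M_whb by blast
  have P3: "(\<forall>(A :: 'a whb) (A' :: 'c whb) h. whb_algebra A \<and> whb_algebra A' \<and> whb_hom A A' h \<longrightarrow>
       tba_hom (Tfun A) (Tfun A') (Tmor A A' h) \<and>
       (\<forall>a\<in>wcar A. Tmor A A' h (sigma A a) = sigma A' (h a)))"
    using c3 by blast
  have P4: "(\<forall>(A :: 'a whb) (B :: 'b tba) f.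
       whb_algebra A \<and> tense_algebra B \<and> whb_hom A (Mfun B) f \<longrightarrow>
       (\<exists>g. tba_hom (Tfun A) B g \<and> (\<forall>a\<in>wcar A. g (sigma A a) = f a) \<and>
            (\<forall>g'. tba_hom (Tfun A) B g' \<and> (\<forall>a\<in>wcar A. g' (sigma A a) = f a) \<longrightarrow>
                  (\<forall>U\<in>tcar (Tfun A). g' U = g U))))"
    using c4 by blast
  have P5: "(\<forall>(A :: 'a whb) (A' :: 'c whb) h.
       whb_algebra A \<and> whb_algebra A' \<and> whb_hom A A' h \<and> inj_on h (wcar A) \<longrightarrow>
       inj_on (Tmor A A' h) (tcar (Tfun A)))"
    using c5 by blast
  have P6: "(\<forall>(A :: 'a whb) (A' :: 'c whb) h1 h2.
       whb_algebra A \<and> whb_algebra A' \<and> whb_hom A A' h1 \<and> whb_hom A A' h2 \<and>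
       (\<forall>U\<in>tcar (Tfun A). Tmor A A' h1 U = Tmor A A' h2 U) \<longrightarrow>
       (\<forall>a\<in>wcar A. h1 a = h2 a))"
    using faithful by blast
  have P7: "(\<forall>(B :: 'b tba) (B' :: 'd tba) f.
       tense_algebra B \<and> tense_algebra B' \<and> whb_hom (Mfun B) (Mfun B') f \<longrightarrow>
       tba_hom B B' f)"
    using M_full by blast
  have P8: "(\<forall>(B :: 'b tba) (B' :: 'd tba) g1 g2.
       tense_algebra B \<and> tense_algebra B' \<and> tba_hom B B' g1 \<and> tba_hom B B' g2 \<and>
       (\<forall>x\<in>wcar (Mfun B). g1 x = g2 x) \<longrightarrow>
       (\<forall>x\<in>tcar B. g1 x = g2 x))"
    unfolding Mfun_def by simp
  show ?thesis using P1 P2 P3 P4 P5 P6 P7 P8 by (intro conjI)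
qed

end
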